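(* For every $\varepsilon>0$ small enough, with $c=\sqrt{1-\varepsilon^2}$, let $\rho$ be the solution of $$-c^2\frac{\rho-1}{\rho}+\frac{c^2(\rho-1)^2}{2\rho^2}+g(\rho)=K(\rho)\rho''+\tfrac12K'(\rho)\rho'^2$$ with $\rho(0)=\rho_{m,\varepsilon}$, $\rho'(0)=0$, and set $u=\frac{c(\rho-1)}{\rho}$. Then $(\rho,u)$ is a global solution on $\mathbb R$ of $$-c\rho'+(\rho u)'=0,\qquad -cu'+\Big(\frac{u^2}{2}\Big)'+g(\rho)'=\Big(K(\rho)\rho''+\tfrac12K'(\rho)\rho'^2\Big)',$$ with $\rho\to1$, $\rho'\to0$, $\rho''\to0$, $u\to0$, $u'\to0$, $u''\to0$ at $\pm\infty$. Moreover $\rho$ is even; if $\gamma>0$ it is increasing on $[0,\infty)$, and if $\gamma<0$ it is decreasing on $[0,\infty)$.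
   Context: Setting (1D). $K,g:(0,\infty)\to\mathbb R$ are smooth, $K>0$, $g(1)=0$, $g'(1)=1$, $\Gamma:=g''(1)+3\neq0$, $\gamma=1/\Gamma$, and $G$ is the primitive of $g$ with $G(1)=0$. For $\varepsilon\in(0,1)$ let $c=\sqrt{1-\varepsilon^2}$ and $F_\varepsilon(\rho)=-\frac{c^2}{2\rho}(\rho-1)^2+G(\rho)$ for $\rho>0$. Define $\rho_{m,\varepsilon}=\sup\{\rho<1:F_\varepsilon(\rho)=0\}$ if $\gamma>0$ and $\rho_{m,\varepsilon}=\inf\{\rho>1:F_\varepsilon(\rho)=0\}$ if $\gamma<0$. *)

theory Defs
  imports "HOL-Analysis.Analysis"
begin

definition smooth_on :: "real set \<Rightarrow> (real \<Rightarrow> real) \<Rightarrow> bool" where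
  "smooth_on S f \<longleftrightarrow> (\<forall>n. \<forall>x\<in>S. ((deriv ^^ n) f) differentiable (at x))"

definition Feps :: "(real \<Rightarrow> real) \<Rightarrow> real \<Rightarrow> real \<Rightarrow> real" where
  "Feps G eps r = - ((sqrt (1 - eps^2))^2 / (2 * r)) * (r - 1)^2 + G r"

definition rho_m :: "(real \<Rightarrow> real) \<Rightarrow> real \<Rightarrow> real \<Rightarrow> real" where
  "rho_m G gam eps =
     (if gam > 0 then Sup {r. 0 < r \<and> r < 1 \<and> Feps G eps r = 0}
      else Inf {r. 1 < r \<and> Feps G eps r = 0})"

definition ode_sol :: "(real \<Rightarrow> real) \<Rightarrow> (real \<Rightarrow> real) \<Rightarrow> real \<Rightarrow> real set \<Rightarrow> (real \<Rightarrow> real) \<Rightarrow> bool" where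
  "ode_sol K g cs I \<sigma> \<longleftrightarrow>
     (\<forall>t\<in>I. \<sigma> t > 0 \<and> \<sigma> differentiable (at t) \<and> deriv \<sigma> differentiable (at t) \<and>
        - (cs^2) * (\<sigma> t - 1) / \<sigma> t + cs^2 * (\<sigma> t - 1)^2 / (2 * (\<sigma> t)^2) + g (\<sigma> t)
        = K (\<sigma> t) * deriv (deriv \<sigma>) t + 1/2 * deriv K (\<sigma> t) * (deriv \<sigma> t)^2)"

end

theory Submission
  imports Defs
begin


lemma neg_from_deriv:
  fixes h h' :: "real \<Rightarrow> real"
  assumes "h 0 = 0" "\<And>y. 0 \<le> y \<Longrightarrow> y \<le> d \<Longrightarrow> DERIV h y :> h' y"
    "\<And>y. 0 < y \<Longrightarrow> y \<le> d \<Longrightarrow> h' y < 0" "0 < y" "y \<le> d"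
  shows "h y < 0"
proof -
  have "h 0 > h y"
  proof (rule DERIV_neg_imp_decreasing_open[of 0 y])
    show "continuous_on {0..y} h"
      using assms(2,4,5) by (intro continuous_at_imp_continuous_on ballI) (meson DERIV_isCont atLeastAtMost_iff order.trans)
  next
    fix x assume "0 < x" "x < y"
    then show "\<exists>z. DERIV h x :> z \<and> z < 0" using assms by (intro exI[of _ "h' x"]) auto
  qed (use assms in auto)
  with assms show ?thesis by simp
qed

lemma pos_from_deriv:
  fixes h h' :: "real \<Rightarrow> real"
  assumes "h 0 = 0" "\<And>y. 0 \<le> y \<Longrightarrow> y \<le> d \<Longrightarrow> DERIV h y :> h' y"
    "\<And>y. 0 < y \<Longrightarrow> y \<le> d \<Longrightarrow> h' y > 0" "0 < y" "y \<le> d"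
  shows "h y > 0"
proof -
  have "h 0 < h y"
  proof (rule DERIV_pos_imp_increasing_open[of 0 y])
    show "continuous_on {0..y} h"
      using assms(2,4,5) by (intro continuous_at_imp_continuous_on ballI) (meson DERIV_isCont atLeastAtMost_iff order.trans)
  next
    fix x assume "0 < x" "x < y"
    then show "\<exists>z. DERIV h x :> z \<and> z > 0" using assms by (intro exI[of _ "h' x"]) auto
  qed (use assms in auto)
  with assms show ?thesis by simp
qed

lemma zero_struct:
  fixes f f1 f2 f3 :: "real \<Rightarrow> real"
  assumes d: "d > 0"
    and D1: "\<And>y. 0 \<le> y \<Longrightarrow> y \<le> d \<Longrightarrow> DERIV f y :> f1 y"
    and D2: "\<And>y. 0 \<le> y \<Longrightarrow> y \<le> d \<Longrightarrow> DERIV f1 y :> f2 y"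
    and D3: "\<And>y. 0 \<le> y \<Longrightarrow> y \<le> d \<Longrightarrow> DERIV f2 y :> f3 y"
    and f0: "f 0 = 0" and f10: "f1 0 = 0" and f20: "f2 0 > 0"
    and f3neg: "\<And>y. 0 < y \<Longrightarrow> y \<le> d \<Longrightarrow> f3 y < 0"
    and fd: "f d < 0"
  shows "\<exists>y0. 0 < y0 \<and> y0 < d \<and> f y0 = 0 \<and> f1 y0 < 0 \<and> (\<forall>y. 0 < y \<and> y < y0 \<longrightarrow> f y > 0)"
proof -
  define Phi where "Phi y = y * f2 y - f1 y" for y
  define Psi where "Psi y = y * f1 y - 2 * f y" for y
  have dPhi: "DERIV Phi y :> y * f3 y" if "0 \<le> y" "y \<le> d" for y
    unfolding Phi_def using D2[OF that] D3[OF that]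
    by (auto intro!: derivative_eq_intros)
  have Phineg: "Phi y < 0" if "0 < y" "y \<le> d" for y
    by (rule neg_from_deriv[where h=Phi and h'="\<lambda>y. y * f3 y" and d=d])
       (use that dPhi f3neg f10 in \<open>auto simp: Phi_def mult_pos_neg\<close>)
  have dPsi: "DERIV Psi y :> Phi y" if "0 \<le> y" "y \<le> d" for y
    unfolding Psi_def Phi_def using D1[OF that] D2[OF that]
    by (auto intro!: derivative_eq_intros)
  have Psineg: "Psi y < 0" if "0 < y" "y \<le> d" for y
    by (rule neg_from_deriv[where h=Psi and h'=Phi and d=d])
       (use that dPsi Phineg f0 in \<open>auto simp: Psi_def\<close>)
  define psi where "psi y = f y / y^2" for y
  have dpsi: "DERIV psi y :> Psi y / y^3" if "0 < y" "y \<le> d" for y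
    unfolding psi_def Psi_def using D1[of y] that
    by (auto intro!: derivative_eq_intros simp: field_simps power2_eq_square power3_eq_cube)
  have psidec: "psi y > psi z" if "0 < y" "y < z" "z \<le> d" for y z
  proof (rule DERIV_neg_imp_decreasing[of y z])
    fix x assume "y \<le> x" "x \<le> z"
    then show "\<exists>yy. DERIV psi x :> yy \<and> yy < 0"
      using that dpsi[of x] Psineg[of x] by (intro exI[of _ "Psi x / x^3"]) (auto simp: divide_neg_pos)
  qed (use that in auto)
  have contpsi: "continuous_on {y..z} psi" if "0 < y" "z \<le> d" for y z
    using that dpsi by (intro continuous_at_imp_continuous_on ballI) (meson DERIV_isCont atLeastAtMost_iff order.trans less_le_trans)
  have "isCont f2 0" using D3[of 0] d by (auto intro: DERIV_isCont)
  then obtain e where e: "e > 0" "\<And>y. y \<noteq> 0 \<Longrightarrow> \<bar>y\<bar> < e \<Longrightarrow> \<bar>f2 y - f2 0\<bar> < f2 0"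
    using f20 LIM_D[of f2 "f2 0" 0 "f2 0"] unfolding isCont_def by auto
  define eta where "eta = min e d / 2"
  have eta: "0 < eta" "eta < d" "eta < e" using e d by (auto simp: eta_def)
  have f2pos: "f2 y > 0" if "0 \<le> y" "y \<le> eta" for y
  proof (cases "y = 0")
    case True then show ?thesis using f20 by simp
  next
    case False then show ?thesis using e(2)[of y] that eta by auto
  qed
  have f1pos: "f1 y > 0" if "0 < y" "y \<le> eta" for y
    by (rule pos_from_deriv[where h=f1 and h'=f2 and d=eta]) (use that f2pos f10 D2 eta in auto)
  have feta: "f eta > 0"
    by (rule pos_from_deriv[where h=f and h'=f1 and d=eta]) (use f1pos f0 D1 eta in auto)
  have "psi d \<le> 0" using fd d by (auto simp: psi_def divide_nonpos_pos)
  moreover have "0 \<le> psi eta" using feta eta by (auto simp: psi_def)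
  ultimately obtain y0 where y0: "eta \<le> y0" "y0 \<le> d" "psi y0 = 0"
    using IVT2'[of psi d 0 eta] contpsi[of eta d] eta by auto
  have fy0: "f y0 = 0" using y0 eta by (auto simp: psi_def)
  have "y0 \<noteq> d" using fy0 fd by auto
  with y0 have y0d: "y0 < d" by auto
  have "Psi y0 < 0" using Psineg[of y0] y0 eta by auto
  then have "f1 y0 < 0" using fy0 y0 eta by (auto simp: Psi_def mult_less_0_iff)
  moreover have "f y > 0" if "0 < y" "y < y0" for y
  proof -
    have "psi y > psi y0" using psidec[of y y0] that y0d by auto
    then show ?thesis using y0 that by (auto simp: psi_def zero_less_divide_iff)
  qed
  ultimately show ?thesis using y0d y0 eta fy0 by (intro exI[of _ y0]) auto
qed




lemma ode_construct:
  fixes D D1 :: "real \<Rightarrow> real" and l :: real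
  assumes l: "l > 0"
    and dD: "\<And>z. 0 \<le> z \<Longrightarrow> z \<le> l \<Longrightarrow> DERIV D z :> D1 z"
    and dD1: "D1 differentiable (at l)"
    and D0: "D 0 = 0" and D10: "D1 0 > 0" and Dpos: "\<And>z. 0 < z \<Longrightarrow> z < l \<Longrightarrow> D z > 0"
    and Dl: "D l = 0" and D1l: "D1 l = 0"
  shows "\<exists>w w1. (\<forall>t. DERIV w t :> w1 t) \<and> (\<forall>t. DERIV w1 t :> D1 (w t) / 2) \<and> (\<forall>t. (w1 t)^2 = D (w t))
     \<and> (\<forall>t. 0 \<le> w t \<and> w t < l) \<and> w 0 = 0 \<and> w1 0 = 0 \<and> (\<forall>t. w (-t) = w t) \<and> strict_mono_on {0..} w
     \<and> (\<forall>F\<in>{at_top, at_bot}. (w \<longlongrightarrow> l) F \<and> (w1 \<longlongrightarrow> 0) F \<and> ((\<lambda>t. D1 (w t)) \<longlongrightarrow> 0) F)"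
proof -
  define b where "b = sqrt l"
  have b: "b > 0" "b^2 = l" using l by (auto simp: b_def)
  define R where "R z = (if z = 0 then D1 0 else D z / z)" for z
  have Rpos: "R z > 0" if "0 \<le> z" "z < l" for z
    using that D10 Dpos[of z] by (auto simp: R_def)
  have Rl: "R l = 0" using l Dl by (simp add: R_def)
  have contD: "isCont D z" if "0 \<le> z" "z \<le> l" for z
    using dD[OF that] by (rule DERIV_isCont)
  have contR: "isCont R z" if "0 \<le> z" "z \<le> l" for z
  proof (cases "z = 0")
    case True
    have "((\<lambda>y. (D y - D 0) / (y - 0)) \<longlongrightarrow> D1 0) (at 0)"
      using dD[of 0] l by (auto simp: has_field_derivative_iff)
    then have "(R \<longlongrightarrow> D1 0) (at 0)"
      by (rule Lim_transform_eventually) (auto simp: eventually_at_filter R_def D0)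
    then show ?thesis using True by (simp add: isCont_def R_def)
  next
    case False
    then have zp: "z > 0" using that by auto
    have ev: "eventually (\<lambda>y. R y = D y / y) (nhds z)"
    proof -
      have "eventually (\<lambda>y. y \<in> {0<..}) (nhds z)" by (rule eventually_nhds_in_open) (use zp in auto)
      then show ?thesis by (rule eventually_mono) (auto simp: R_def)
    qed
    show ?thesis
      using contD[OF that] zp by (subst isCont_cong[OF ev]) (auto intro!: continuous_intros)
  qed
  define fi where "fi v = 2 / sqrt (R (v^2))" for v
  define h where "h v = sqrt (R (v^2)) / 2" for v
  have sqb: "v^2 < l" if "-b < v" "v < b" for v
  proof -
    have "\<bar>v\<bar> < b" using that by auto
    then have "\<bar>v\<bar>^2 < b^2" using b by (intro power_strict_mono) auto
    then show ?thesis using b by simp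
  qed
  have sqb2: "v^2 \<le> l" if "-b \<le> v" "v \<le> b" for v
  proof -
    have "\<bar>v\<bar> \<le> b" using that by auto
    then have "\<bar>v\<bar>^2 \<le> b^2" using b by (intro power_mono) auto
    then show ?thesis using b by simp
  qed
  have contRsq: "isCont (\<lambda>v. R (v^2)) v" if "-b \<le> v" "v \<le> b" for v
    using contR[of "v^2"] sqb2[OF that] by (auto intro!: continuous_intros isCont_o2[where f="\<lambda>v. v^2"])
  have fipos: "fi v > 0" if "-b < v" "v < b" for v
    using Rpos[of "v^2"] sqb[OF that] by (auto simp: fi_def)
  have contfi: "isCont fi v" if "-b < v" "v < b" for v
    unfolding fi_def using contRsq[of v] that Rpos[of "v^2"] sqb[OF that]
    by (auto intro!: continuous_intros isCont_o2[where g=sqrt and f="\<lambda>v. R (v^2)"])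
  obtain T0 where T0: "\<And>x. -b < x \<Longrightarrow> x < b \<Longrightarrow> (T0 has_vector_derivative fi x) (at x)"
    using einterval_antiderivative[of "ereal (-b)" "ereal b" fi] b contfi by auto
  define T where "T v = T0 v - T0 0" for v
  have dT: "DERIV T v :> fi v" if "-b < v" "v < b" for v
    using T0[OF that] unfolding T_def has_real_derivative_iff_has_vector_derivative[symmetric]
    by (auto intro!: derivative_eq_intros)
  have T00: "T 0 = 0" by (simp add: T_def)
  have contT: "isCont T v" if "-b < v" "v < b" for v using dT[OF that] by (rule DERIV_isCont)
  have Tmono: "T u < T v" if "-b < u" "u < v" "v < b" for u v
  proof (rule DERIV_pos_imp_increasing[of u v])
    fix x assume "u \<le> x" "x \<le> v"
    then show "\<exists>y. DERIV T x :> y \<and> 0 < y"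
      using that dT[of x] fipos[of x] by (intro exI[of _ "fi x"]) auto
  qed (use that in auto)
  have Tmono': "T u \<le> T v" if "-b < u" "u \<le> v" "v < b" for u v
    using Tmono[of u v] that by (cases "u = v") auto
  have Todd: "T (-v) = - T v" if "-b < v" "v < b" for v
  proof -
    have "(\<lambda>v. T v + T (-v)) v = (\<lambda>v. T v + T (-v)) 0"
    proof (rule DERIV_isconst3[of "-b" b v 0 "\<lambda>v. T v + T (-v)"])
      fix x assume x: "x \<in> {-b<..<b}"
      have d2: "DERIV (\<lambda>v. T (-v)) x :> fi (-x) * (-1)"
        by (rule DERIV_chain2[where f=T and g=uminus]) (use dT x in \<open>auto intro!: derivative_eq_intros\<close>)
      have "DERIV (\<lambda>v. T v + T (-v)) x :> fi x + fi (-x) * (-1)"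
      proof -
        have d1: "DERIV T x :> fi x" using dT x by auto
        show ?thesis using DERIV_add[OF d1 d2] by simp
      qed
      then show "DERIV (\<lambda>v. T v + T (-v)) x :> 0" by (simp add: fi_def)
    qed (use that b in auto)
    then show ?thesis using T00 by simp
  qed
  obtain dl where dl: "DERIV D1 l :> dl" using dD1 by (auto simp: real_differentiable_def)
  define L where "L = \<bar>dl\<bar> + 1"
  have L: "L > 0" by (simp add: L_def)
  have "((\<lambda>y. (D1 y - D1 l) / (y - l)) \<longlongrightarrow> dl) (at l)"
    using dl by (simp add: has_field_derivative_iff)
  then obtain eta where eta: "eta > 0"
    "\<And>y. y \<noteq> l \<Longrightarrow> \<bar>y - l\<bar> < eta \<Longrightarrow> \<bar>(D1 y - D1 l) / (y - l) - dl\<bar> < 1"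
    using LIM_D[of _ dl l 1] by force
  have D1b: "\<bar>D1 y\<bar> \<le> L * \<bar>y - l\<bar>" if "y \<noteq> l" "\<bar>y - l\<bar> < eta" for y
  proof -
    have "\<bar>D1 y / (y - l) - dl\<bar> < 1" using eta(2)[OF that] D1l by simp
    then have "\<bar>D1 y / (y - l)\<bar> \<le> L" unfolding L_def by linarith
    then have "\<bar>D1 y\<bar> / \<bar>y - l\<bar> \<le> L" by (simp add: abs_divide)
    then show ?thesis using that by (simp add: divide_le_eq)
  qed
  have Dbound: "D z \<le> L * (l - z)^2" if zz: "0 \<le> z" "l - eta < z" "z < l" for z
  proof -
    obtain xi where xi: "z < xi" "xi < l" "D l - D z = (l - z) * D1 xi"
      using MVT2[of z l D D1] zz dD by auto
    have "\<bar>D1 xi\<bar> \<le> L * \<bar>xi - l\<bar>" using D1b[of xi] xi that by auto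
    also have "\<dots> \<le> L * (l - z)" using xi L by (intro mult_left_mono) auto
    finally have *: "\<bar>D1 xi\<bar> \<le> L * (l - z)" .
    have "D z = - ((l - z) * D1 xi)" using xi Dl by linarith
    also have "\<dots> = (l - z) * (- D1 xi)" by simp
    also have "\<dots> \<le> (l - z) * \<bar>D1 xi\<bar>" using zz by (intro mult_left_mono) auto
    also have "\<dots> \<le> (l - z) * (L * (l - z))" using * that by (intro mult_left_mono) auto
    finally show ?thesis by (simp add: power2_eq_square mult_ac)
  qed
  define v1 where "v1 = max (b/2) (sqrt (max 0 (l - eta/2)))"
  have v1: "0 < v1" "v1 < b"
  proof -
    show "0 < v1" using b by (auto simp: v1_def)
    have "sqrt (max 0 (l - eta/2)) < sqrt l" using l eta by (intro real_sqrt_less_mono) auto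
    then show "v1 < b" using b by (auto simp: v1_def b_def)
  qed
  define k where "k = 1 / (2 * sqrt L)"
  have k: "k > 0" using L by (simp add: k_def)
  have fibig: "fi v \<ge> k / (b - v)" if "v1 \<le> v" "v < b" for v
  proof -
    have vpos: "v > 0" "b / 2 \<le> v" using v1 that by (auto simp: v1_def)
    have "sqrt (max 0 (l - eta/2)) \<le> v" using that by (auto simp: v1_def)
    then have "(sqrt (max 0 (l - eta/2)))^2 \<le> v^2" by (intro power_mono) auto
    then have v2: "l - eta/2 \<le> v^2" by simp
    have v2l: "v^2 < l" using sqb[of v] that vpos b by auto
    have Dv: "D (v^2) \<le> L * (l - v^2)^2" using Dbound[of "v^2"] v2 v2l eta by auto
    have Dvp: "D (v^2) > 0" using Dpos[of "v^2"] v2l vpos by auto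
    have lv: "l - v^2 = (b - v) * (b + v)" using b by (simp add: algebra_simps power2_eq_square)
    have "b + v \<le> 4 * v" using vpos by linarith
    then have "(b + v)^2 \<le> (4 * v)^2" by (rule power_mono) (use b vpos in auto)
    then have bv: "(b + v)^2 \<le> 16 * v^2" by (simp add: power_mult_distrib)
    have "L * (l - v^2)^2 = L * (b - v)^2 * (b + v)^2" by (simp add: lv power_mult_distrib)
    also have "\<dots> \<le> L * (b - v)^2 * (16 * v^2)" using L bv by (intro mult_left_mono) auto
    finally have "D (v^2) \<le> (16 * L * (b - v)^2) * v^2" using Dv by (simp add: mult_ac)
    then have Rb: "R (v^2) \<le> 16 * L * (b - v)^2" using vpos by (simp add: R_def divide_le_eq)
    have "sqrt (R (v^2)) \<le> sqrt (16 * L * (b - v)^2)" using Rb by (rule real_sqrt_le_mono)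
    also have "\<dots> = 4 * sqrt L * (b - v)" using that
      by (simp add: real_sqrt_mult)
    finally have sR: "sqrt (R (v^2)) \<le> 4 * sqrt L * (b - v)" .
    have Rp: "sqrt (R (v^2)) > 0" using Rpos[of "v^2"] v2l by auto
    have "k / (b - v) = 2 / (4 * sqrt L * (b - v))" by (simp add: k_def)
    also have "\<dots> \<le> 2 / sqrt (R (v^2))" using Rp sR by (intro divide_left_mono) (use L that in auto)
    finally show ?thesis by (simp add: fi_def)
  qed
  have Tbig: "\<exists>v. 0 \<le> v \<and> v < b \<and> T v \<ge> M" for M
  proof -
    define H where "H v = T v + k * ln (b - v)" for v
    have Hmono: "H v1 \<le> H v" if "v1 \<le> v" "v < b" for v
    proof (rule DERIV_nonneg_imp_nondecreasing[OF that(1)])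
      fix x assume x: "v1 \<le> x" "x \<le> v"
      have "DERIV H x :> fi x + k * (- 1 / (b - x))"
        unfolding H_def using dT[of x] x that v1 b
        by (auto intro!: derivative_eq_intros simp: field_simps)
      moreover have "fi x + k * (- 1 / (b - x)) \<ge> 0" using fibig[of x] x that by simp
      ultimately show "\<exists>y. DERIV H x :> y \<and> 0 \<le> y" by blast
    qed
    define q where "q = exp (- \<bar>M - T v1\<bar> / k)"
    have q: "0 < q" "q \<le> 1" using k by (auto simp: q_def)
    define v where "v = b - (b - v1) * q"
    have "(b - v1) * q \<le> (b - v1)" using q v1 by (simp add: mult_left_le)
    moreover have "(b - v1) * q > 0" using q v1 by simp
    ultimately have v: "v1 \<le> v" "v < b" by (auto simp: v_def)
    have "ln (b - v) = ln (b - v1) + ln q" using q v1 by (simp add: v_def ln_mult)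
    also have "ln q = - \<bar>M - T v1\<bar> / k" by (simp add: q_def)
    finally have "T v = H v - k * (ln (b - v1) - \<bar>M - T v1\<bar> / k)" by (simp add: H_def)
    also have "\<dots> \<ge> H v1 - k * (ln (b - v1) - \<bar>M - T v1\<bar> / k)" using Hmono[OF v] by simp
    finally have "T v \<ge> T v1 + \<bar>M - T v1\<bar>" using k by (simp add: H_def algebra_simps)
    then have "T v \<ge> M" by linarith
    then show ?thesis using v v1 by (intro exI[of _ v]) auto
  qed
  have Tsurj: "\<exists>v. -b < v \<and> v < b \<and> T v = t" for t
  proof -
    obtain vp where vp: "0 \<le> vp" "vp < b" "T vp \<ge> \<bar>t\<bar>" using Tbig by blast
    have "T (-vp) \<le> t" using Todd[of vp] vp b by auto
    moreover have "t \<le> T vp" using vp by auto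
    moreover have "continuous_on {-vp..vp} T"
      using vp contT by (intro continuous_at_imp_continuous_on ballI) auto
    ultimately obtain v where "-vp \<le> v" "v \<le> vp" "T v = t"
      using IVT'[of T "-vp" t vp] vp by auto
    then show ?thesis using vp by (intro exI[of _ v]) auto
  qed
  have Tinj: "u = v" if "-b < u" "u < b" "-b < v" "v < b" "T u = T v" for u v
    using Tmono[of u v] Tmono[of v u] that by (cases u v rule: linorder_cases) auto
  define V where "V t = (THE v. -b < v \<and> v < b \<and> T v = t)" for t
  have VT: "-b < V t \<and> V t < b \<and> T (V t) = t" for t
  proof -
    have "\<exists>!v. -b < v \<and> v < b \<and> T v = t" using Tsurj[of t] Tinj by blast
    then show ?thesis unfolding V_def by (rule theI')
  qed
  have TV: "V (T v) = v" if "-b < v" "v < b" for v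
    using VT[of "T v"] Tinj[of "V (T v)" v] that by auto
  have Vmono: "V t1 < V t2" if "t1 < t2" for t1 t2
    using Tmono'[of "V t2" "V t1"] VT[of t1] VT[of t2] that by force
  have V0: "V 0 = 0" using TV[of 0] T00 b by simp
  have Vodd: "V (-t) = - V t" for t
    using TV[of "- V t"] VT[of t] Todd[of "V t"] by auto
  have Vcont: "isCont V t" for t
  proof -
    define dd where "dd = min (b - V t) (V t + b) / 2"
    have dd: "dd > 0" using VT[of t] by (auto simp: dd_def)
    have "isCont V (T (V t))"
    proof (rule isCont_inverse_function[where f=T and g=V and x="V t", OF dd])
      fix z assume "\<bar>z - V t\<bar> \<le> dd"
      then have z: "-b < z" "z < b" using VT[of t] by (auto simp: dd_def abs_if split: if_splits)
      show "V (T z) = z" using TV[OF z] .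
      show "isCont T z" using contT[OF z] .
    qed
    then show ?thesis using VT[of t] by simp
  qed
  have dV: "DERIV V t :> h (V t)" for t
  proof -
    have "DERIV V t :> inverse (fi (V t))"
    proof (rule DERIV_inverse_function[where f=T and g=V and D="fi (V t)" and x=t and a="t - 1" and b="t + 1"])
      show "DERIV T (V t) :> fi (V t)" using dT VT by blast
      show "fi (V t) \<noteq> 0" using fipos VT by (metis less_irrefl)
    qed (use VT Vcont in auto)
    then show ?thesis by (simp add: fi_def h_def)
  qed
  define W where "W v = v * sqrt (R (v^2))" for v
  have dR: "DERIV R z :> (D1 z * z - D z) / z^2" if "0 < z" "z \<le> l" for z
  proof (rule has_field_derivative_transform_within_open[of "\<lambda>z. D z / z" _ z "{0<..}"])
    show "DERIV (\<lambda>z. D z / z) z :> (D1 z * z - D z) / z^2"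
      using dD[of z] that by (auto intro!: derivative_eq_intros simp: field_simps power2_eq_square)
  qed (use that in \<open>auto simp: R_def\<close>)
  have dWnz: "DERIV W v :> sqrt (R (v^2)) + (D1 (v^2) * v^2 - D (v^2)) / (v^2 * sqrt (R (v^2)))"
    if "-b < v" "v < b" "v \<noteq> 0" for v
  proof -
    have z: "0 < v^2" "v^2 \<le> l" using that sqb[OF that(1,2)] by auto
    have Rp: "R (v^2) > 0" using Rpos[of "v^2"] z sqb[OF that(1,2)] by auto
    have "DERIV (\<lambda>v. R (v^2)) v :> (D1 (v^2) * v^2 - D (v^2)) / (v^2)^2 * (2 * v)"
    proof -
      have dsq: "DERIV (\<lambda>v. v^2) v :> (2 * v)" by (auto intro!: derivative_eq_intros)
      show ?thesis using DERIV_chain2[where f=R and g="\<lambda>v. v^2", OF dR[OF z] dsq] by simp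
    qed
    then have "DERIV (\<lambda>v. sqrt (R (v^2))) v :> inverse (sqrt (R (v^2))) / 2 * ((D1 (v^2) * v^2 - D (v^2)) / (v^2)^2 * (2 * v))"
      using Rp by (auto intro!: derivative_eq_intros)
    then have "DERIV W v :> 1 * sqrt (R (v^2)) + (inverse (sqrt (R (v^2))) / 2 * ((D1 (v^2) * v^2 - D (v^2)) / (v^2)^2 * (2 * v))) * v"
      unfolding W_def by (rule DERIV_mult[OF DERIV_ident])
    moreover have "1 * sqrt (R (v^2)) + (inverse (sqrt (R (v^2))) / 2 * ((D1 (v^2) * v^2 - D (v^2)) / (v^2)^2 * (2 * v))) * v
       = sqrt (R (v^2)) + (D1 (v^2) * v^2 - D (v^2)) / (v^2 * sqrt (R (v^2)))"
      using that Rp by (simp add: field_simps power2_eq_square)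
    ultimately show ?thesis by simp
  qed
  have dW0: "DERIV W 0 :> sqrt (R 0)"
  proof -
    have "((\<lambda>y. sqrt (R (y^2))) \<longlongrightarrow> sqrt (R 0)) (at 0)"
      using contRsq[of 0] b by (auto intro!: tendsto_intros simp: isCont_def)
    then have "((\<lambda>y. (W y - W 0) / (y - 0)) \<longlongrightarrow> sqrt (R 0)) (at 0)"
      by (rule Lim_transform_eventually) (auto simp: eventually_at_filter W_def)
    then show ?thesis by (simp add: has_field_derivative_iff)
  qed
  define w where "w t = (V t)^2" for t
  define w1 where "w1 t = W (V t)" for t
  have dw: "DERIV w t :> w1 t" for t
  proof -
    have "DERIV w t :> 2 * V t * h (V t)"
      unfolding w_def using dV[of t] by (auto intro!: derivative_eq_intros)
    then show ?thesis by (simp add: w1_def W_def h_def)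
  qed
  have dw1: "DERIV w1 t :> D1 (w t) / 2" for t
  proof (cases "V t = 0")
    case True
    have "DERIV w1 t :> sqrt (R (V t ^ 2)) * h (V t)"
      unfolding w1_def using DERIV_chain2[where f=W and g=V and x=t, OF _ dV[of t]] dW0 True by auto
    moreover have "sqrt (R (V t ^ 2)) * h (V t) = D1 (w t) / 2"
      using True Rpos[of 0] l by (simp add: h_def w_def R_def)
    ultimately show ?thesis by simp
  next
    case False
    let ?v = "V t"
    have vb: "-b < ?v" "?v < b" using VT by auto
    have Rp: "R (?v^2) > 0" using Rpos[of "?v^2"] sqb[OF vb] by auto
    have "DERIV w1 t :> (sqrt (R (?v^2)) + (D1 (?v^2) * ?v^2 - D (?v^2)) / (?v^2 * sqrt (R (?v^2)))) * h ?v"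
      unfolding w1_def using DERIV_chain2[OF dWnz[OF vb False] dV[of t]] by simp
    moreover have "(sqrt (R (?v^2)) + (D1 (?v^2) * ?v^2 - D (?v^2)) / (?v^2 * sqrt (R (?v^2)))) * h ?v
       = D1 (w t) / 2"
    proof -
      have sq: "sqrt (R (?v^2)) * sqrt (R (?v^2)) = D (?v^2) / ?v^2"
        using Rp False Dpos[of "?v^2"] sqb[OF vb] by (simp add: R_def)
      show ?thesis using Rp False sq unfolding h_def w_def
        by (simp add: field_simps power2_eq_square)
    qed
    ultimately show ?thesis by simp
  qed
  have w1sq: "(w1 t)^2 = D (w t)" for t
  proof (cases "V t = 0")
    case True then show ?thesis by (simp add: w1_def w_def W_def D0)
  next
    case False
    have vb: "-b < V t" "V t < b" using VT by auto
    have Rp: "R (V t ^2) > 0" using Rpos[of "V t ^2"] sqb[OF vb] by auto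
    then show ?thesis using False by (simp add: w1_def w_def W_def power_mult_distrib R_def)
  qed
  have wb: "0 \<le> w t \<and> w t < l" for t using sqb[of "V t"] VT[of t] by (simp add: w_def)
  have w0: "w 0 = 0" "w1 0 = 0" by (simp_all add: w_def w1_def V0 W_def)
  have weven: "w (-t) = w t" for t by (simp add: w_def Vodd)
  have wmono: "strict_mono_on {0..} w"
  proof (rule strict_mono_onI)
    fix r s :: real assume "r \<in> {0..}" "s \<in> {0..}" "r < s"
    then have "0 \<le> V r" "V r < V s"
      using Vmono[of 0 r] V0 Vmono[of r s] by (auto simp: le_less)
    then show "w r < w s" unfolding w_def by (intro power_strict_mono) auto
  qed
  have Vtop: "(V \<longlongrightarrow> b) at_top"
  proof (rule order_tendstoI)
    fix a assume a: "a < b"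
    define a2 where "a2 = max a 0"
    have a2: "-b < a2" "a2 < b" "a \<le> a2" using a b by (auto simp: a2_def)
    have "eventually (\<lambda>t. t > T a2) at_top" by (rule eventually_gt_at_top)
    then show "eventually (\<lambda>t. a < V t) at_top"
    proof (rule eventually_mono)
      fix t assume "t > T a2"
      then have "V t > V (T a2)" by (rule Vmono)
      then show "a < V t" using TV[OF a2(1,2)] a2 by auto
    qed
  next
    fix a assume "b < a" then show "eventually (\<lambda>t. V t < a) at_top" using VT
      by (auto intro: always_eventually less_trans)
  qed
  have Vbot: "(V \<longlongrightarrow> -b) at_bot"
  proof (rule order_tendstoI)
    fix a assume a: "a > -b"
    define a2 where "a2 = min a 0"
    have a2: "-b < a2" "a2 < b" "a2 \<le> a" using a b by (auto simp: a2_def)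
    have "eventually (\<lambda>t. t < T a2) at_bot" by (rule eventually_gt_at_bot)
    then show "eventually (\<lambda>t. V t < a) at_bot"
    proof (rule eventually_mono)
      fix t assume "t < T a2"
      then have "V t < V (T a2)" by (rule Vmono)
      then show "V t < a" using TV[OF a2(1,2)] a2 by auto
    qed
  next
    fix a assume "a < -b" then show "eventually (\<lambda>t. a < V t) at_bot" using VT
      by (auto intro: always_eventually less_trans)
  qed
  have contW: "isCont W v" if "v = b \<or> v = -b" for v
    using contRsq[of v] that b unfolding W_def by (auto intro!: continuous_intros isCont_o2[where g=sqrt and f="\<lambda>v. R (v^2)"])
  have Wb: "W b = 0" "W (-b) = 0" using b Rl by (simp_all add: W_def)
  have contD1: "isCont D1 l" using dl by (rule DERIV_isCont)
  have lims: "(w \<longlongrightarrow> l) F \<and> (w1 \<longlongrightarrow> 0) F \<and> ((\<lambda>t. D1 (w t)) \<longlongrightarrow> 0) F"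
    if "(V \<longlongrightarrow> c) F" "c = b \<or> c = -b" for F c
  proof -
    have wl: "(w \<longlongrightarrow> l) F"
      using tendsto_power[OF that(1), of 2] that(2) b unfolding w_def by auto
    moreover have "(w1 \<longlongrightarrow> W c) F"
      unfolding w1_def using isCont_tendsto_compose[OF contW[OF that(2)] that(1)] .
    moreover have "((\<lambda>t. D1 (w t)) \<longlongrightarrow> D1 l) F"
      using isCont_tendsto_compose[OF contD1 wl] .
    ultimately show ?thesis using Wb D1l that(2) by auto
  qed
  show ?thesis
    apply (rule exI[of _ w], rule exI[of _ w1])
    using dw dw1 w1sq wb w0 weven wmono lims[OF Vtop] lims[OF Vbot] by auto
qed



lemma gron_ineq:
  fixes a c dl L :: real
  assumes "L \<ge> 0" "\<bar>dl\<bar> \<le> L * (\<bar>a\<bar> + \<bar>c\<bar>)"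
  shows "\<bar>2 * a * c + 2 * c * dl\<bar> \<le> (1 + 3 * L) * (a^2 + c^2)"
proof -
  have 1: "\<bar>2 * a * c\<bar> \<le> a^2 + c^2"
  proof -
    have "0 \<le> (a - c)^2" "0 \<le> (a + c)^2" by simp_all
    then have "2 * a * c \<le> a^2 + c^2" "- (2 * a * c) \<le> a^2 + c^2"
      by (simp_all add: power2_diff power2_sum)
    then show ?thesis by (simp add: abs_le_iff)
  qed
  have 2: "2 * \<bar>a\<bar> * \<bar>c\<bar> \<le> a^2 + c^2"
    using 1 by (simp add: abs_mult)
  have "\<bar>2 * c * dl\<bar> = 2 * \<bar>c\<bar> * \<bar>dl\<bar>" by (simp add: abs_mult)
  also have "\<dots> \<le> 2 * \<bar>c\<bar> * (L * (\<bar>a\<bar> + \<bar>c\<bar>))" using assms by (intro mult_left_mono) auto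
  also have "\<dots> = L * (2 * \<bar>a\<bar> * \<bar>c\<bar> + 2 * c^2)" by (simp add: algebra_simps power2_eq_square)
  also have "\<dots> \<le> L * (a^2 + c^2 + 2 * (a^2 + c^2))"
  proof -
    have "2 * \<bar>a\<bar> * \<bar>c\<bar> + 2 * c^2 \<le> a^2 + c^2 + 2 * (a^2 + c^2)"
    proof -
      have aux: "X + 2 * C \<le> A + C + 2 * (A + C)" if "X \<le> A + C" "0 \<le> (A::real)" for X A C
        using that by simp
      show ?thesis by (rule aux[OF 2]) simp
    qed
    then show ?thesis using assms by (intro mult_left_mono) auto
  qed
  finally have "\<bar>2 * c * dl\<bar> \<le> 3 * L * (a^2 + c^2)" by (simp add: algebra_simps)
  moreover have "\<bar>2 * a * c + 2 * c * dl\<bar> \<le> \<bar>2 * a * c\<bar> + \<bar>2 * c * dl\<bar>" by (rule abs_triangle_ineq)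
  ultimately show ?thesis using 1 by (simp add: algebra_simps)
qed

lemma uniq_ode2:
  fixes A :: "real \<Rightarrow> real \<Rightarrow> real" and x y xp yp :: "real \<Rightarrow> real" and I :: "real set"
  assumes lip: "\<And>m M P. 0 < m \<Longrightarrow> \<exists>L. \<forall>r1 r2 p1 p2. m \<le> r1 \<and> r1 \<le> M \<and> m \<le> r2 \<and> r2 \<le> M
        \<and> \<bar>p1\<bar> \<le> P \<and> \<bar>p2\<bar> \<le> P \<longrightarrow> \<bar>A r1 p1 - A r2 p2\<bar> \<le> L * (\<bar>r1 - r2\<bar> + \<bar>p1 - p2\<bar>)"
    and I: "is_interval I" "0 \<in> I"
    and xs: "\<And>t. t \<in> I \<Longrightarrow> x t > 0 \<and> DERIV x t :> xp t \<and> DERIV xp t :> A (x t) (xp t)"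
    and ys: "\<And>t. t \<in> I \<Longrightarrow> y t > 0 \<and> DERIV y t :> yp t \<and> DERIV yp t :> A (y t) (yp t)"
    and init: "x 0 = y 0" "xp 0 = yp 0"
    and t: "t \<in> I"
  shows "x t = y t"
proof -
  define J where "J = {min 0 t..max 0 t}"
  have JI: "J \<subseteq> I"
  proof
    fix s assume "s \<in> J"
    then show "s \<in> I" using I t unfolding J_def
      by (cases "0 \<le> t") (auto intro: mem_is_interval_1_I)
  qed
  have J: "compact J" "J \<noteq> {}" by (auto simp: J_def)
  have cont: "continuous_on J f" if "\<And>s. s \<in> I \<Longrightarrow> isCont f s" for f
    using JI that by (intro continuous_at_imp_continuous_on) auto
  have cx: "continuous_on J x" "continuous_on J y"
    "continuous_on J (\<lambda>s. \<bar>xp s\<bar>)" "continuous_on J (\<lambda>s. \<bar>yp s\<bar>)"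
    using xs ys by (auto intro!: cont continuous_intros DERIV_isCont)
  obtain s1 where s1: "s1 \<in> J" "\<And>s. s \<in> J \<Longrightarrow> x s1 \<le> x s" using continuous_attains_inf[OF J cx(1)] by auto
  obtain s2 where s2: "s2 \<in> J" "\<And>s. s \<in> J \<Longrightarrow> y s2 \<le> y s" using continuous_attains_inf[OF J cx(2)] by auto
  obtain s3 where s3: "s3 \<in> J" "\<And>s. s \<in> J \<Longrightarrow> x s \<le> x s3" using continuous_attains_sup[OF J cx(1)] by auto
  obtain s4 where s4: "s4 \<in> J" "\<And>s. s \<in> J \<Longrightarrow> y s \<le> y s4" using continuous_attains_sup[OF J cx(2)] by auto
  obtain s5 where s5: "s5 \<in> J" "\<And>s. s \<in> J \<Longrightarrow> \<bar>xp s\<bar> \<le> \<bar>xp s5\<bar>" using continuous_attains_sup[OF J cx(3)] by auto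
  obtain s6 where s6: "s6 \<in> J" "\<And>s. s \<in> J \<Longrightarrow> \<bar>yp s\<bar> \<le> \<bar>yp s6\<bar>" using continuous_attains_sup[OF J cx(4)] by auto
  define m where "m = min (x s1) (y s2)"
  define M where "M = max (x s3) (y s4)"
  define P where "P = max \<bar>xp s5\<bar> \<bar>yp s6\<bar>"
  have m: "m > 0" using xs[of s1] ys[of s2] s1 s2 JI by (auto simp: m_def)
  obtain L0 where L0: "\<And>r1 r2 p1 p2. m \<le> r1 \<Longrightarrow> r1 \<le> M \<Longrightarrow> m \<le> r2 \<Longrightarrow> r2 \<le> M
        \<Longrightarrow> \<bar>p1\<bar> \<le> P \<Longrightarrow> \<bar>p2\<bar> \<le> P \<Longrightarrow> \<bar>A r1 p1 - A r2 p2\<bar> \<le> L0 * (\<bar>r1 - r2\<bar> + \<bar>p1 - p2\<bar>)"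
    using lip[OF m, of M P] by blast
  define L where "L = \<bar>L0\<bar>"
  have L: "L \<ge> 0" by (simp add: L_def)
  have Lb: "\<bar>A (x s) (xp s) - A (y s) (yp s)\<bar> \<le> L * (\<bar>x s - y s\<bar> + \<bar>xp s - yp s\<bar>)" if "s \<in> J" for s
  proof -
    have "\<bar>A (x s) (xp s) - A (y s) (yp s)\<bar> \<le> L0 * (\<bar>x s - y s\<bar> + \<bar>xp s - yp s\<bar>)"
      using that s1 s2 s3 s4 s5 s6 by (intro L0) (force simp: m_def M_def P_def)+
    also have "\<dots> \<le> L * (\<bar>x s - y s\<bar> + \<bar>xp s - yp s\<bar>)" unfolding L_def
      by (intro mult_right_mono) auto
    finally show ?thesis .
  qed
  define k where "k = 1 + 3 * L"
  have k: "k > 0" using L by (simp add: k_def)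
  define E where "E s = (x s - y s)^2 + (xp s - yp s)^2" for s
  define E' where "E' s = 2 * (x s - y s) * (xp s - yp s) + 2 * (xp s - yp s) * (A (x s) (xp s) - A (y s) (yp s))" for s
  have dE: "DERIV E s :> E' s" if "s \<in> J" for s
    unfolding E_def E'_def using xs[of s] ys[of s] that JI
    by (auto intro!: derivative_eq_intros simp: algebra_simps)
  have Eb: "\<bar>E' s\<bar> \<le> k * E s" if "s \<in> J" for s
    unfolding E'_def E_def k_def using gron_ineq[OF L Lb[OF that]] by simp
  have E0: "E 0 = 0" by (simp add: E_def init)
  have Enn: "E s \<ge> 0" for s by (simp add: E_def)
  have "E t \<le> 0"
  proof (cases "0 \<le> t")
    case True
    define G where "G s = E s * exp (- k * s)" for s
    have "G t \<le> G 0"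
    proof (rule DERIV_nonpos_imp_nonincreasing[OF True])
      fix s assume s: "0 \<le> s" "s \<le> t"
      then have sJ: "s \<in> J" using True by (auto simp: J_def)
      have "DERIV G s :> E' s * exp (- k * s) + E s * (exp (- k * s) * (- k))"
        unfolding G_def using dE[OF sJ] by (auto intro!: derivative_eq_intros)
      moreover have "E' s * exp (- k * s) + E s * (exp (- k * s) * (- k)) \<le> 0"
      proof -
        have "E' s - k * E s \<le> 0" using Eb[OF sJ] by linarith
        then have "(E' s - k * E s) * exp (- k * s) \<le> 0" by (simp add: mult_nonpos_nonneg)
        then show ?thesis by (simp add: algebra_simps)
      qed
      ultimately show "\<exists>y. DERIV G s :> y \<and> y \<le> 0" by blast
    qed
    then show ?thesis using E0 by (simp add: G_def mult_le_0_iff)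
  next
    case False
    define G where "G s = E s * exp (k * s)" for s
    have "G t \<le> G 0"
    proof (rule DERIV_nonneg_imp_nondecreasing[of t 0 G])
      show "t \<le> 0" using False by simp
      fix s assume s: "t \<le> s" "s \<le> 0"
      then have sJ: "s \<in> J" using False by (auto simp: J_def)
      have "DERIV G s :> E' s * exp (k * s) + E s * (exp (k * s) * k)"
        unfolding G_def using dE[OF sJ] by (auto intro!: derivative_eq_intros)
      moreover have "E' s * exp (k * s) + E s * (exp (k * s) * k) \<ge> 0"
      proof -
        have "E' s + k * E s \<ge> 0" using Eb[OF sJ] by linarith
        then have "(E' s + k * E s) * exp (k * s) \<ge> 0" by simp
        then show ?thesis by (simp add: algebra_simps)
      qed
      ultimately show "\<exists>y. DERIV G s :> y \<and> y \<ge> 0" by blast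
    qed
    then show ?thesis using E0 by (simp add: G_def mult_le_0_iff)
  qed
  then have "E t = 0" using Enn[of t] by linarith
  then show ?thesis by (simp add: E_def sum_power2_eq_zero_iff)
qed



lemma lip_C1:
  fixes f f' :: "real \<Rightarrow> real"
  assumes d: "\<And>z. m \<le> z \<Longrightarrow> z \<le> M \<Longrightarrow> DERIV f z :> f' z"
    and c: "continuous_on {m..M} f'"
  shows "\<exists>L. \<forall>r1 r2. m \<le> r1 \<and> r1 \<le> M \<and> m \<le> r2 \<and> r2 \<le> M \<longrightarrow> \<bar>f r1 - f r2\<bar> \<le> L * \<bar>r1 - r2\<bar>"
proof (cases "m \<le> M")
  case False then show ?thesis by auto
next
  case True
  have "continuous_on {m..M} (\<lambda>z. \<bar>f' z\<bar>)" using c by (intro continuous_intros)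
  then obtain z0 where z0: "z0 \<in> {m..M}" "\<And>z. z \<in> {m..M} \<Longrightarrow> \<bar>f' z\<bar> \<le> \<bar>f' z0\<bar>"
    using continuous_attains_sup[of "{m..M}" "\<lambda>z. \<bar>f' z\<bar>"] True by auto
  have "\<bar>f r1 - f r2\<bar> \<le> \<bar>f' z0\<bar> * \<bar>r1 - r2\<bar>" if r: "m \<le> r1" "r1 \<le> M" "m \<le> r2" "r2 \<le> M" for r1 r2
  proof -
    have *: "\<bar>f u - f v\<bar> \<le> \<bar>f' z0\<bar> * \<bar>u - v\<bar>" if uv: "m \<le> u" "u < v" "v \<le> M" for u v
    proof -
      obtain z where z: "u < z" "z < v" "f v - f u = (v - u) * f' z"
        using MVT2[of u v f f'] d uv by auto
      have "\<bar>f u - f v\<bar> = \<bar>(v - u) * f' z\<bar>" by (metis z(3) abs_minus_commute)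
      also have "\<dots> = \<bar>v - u\<bar> * \<bar>f' z\<bar>" by (simp add: abs_mult)
      also have "\<dots> \<le> \<bar>v - u\<bar> * \<bar>f' z0\<bar>" using z0(2)[of z] z uv by (intro mult_left_mono) auto
      finally show ?thesis by (simp add: abs_minus_commute mult.commute)
    qed
    show ?thesis
      using *[of r1 r2] *[of r2 r1] r by (cases r1 r2 rule: linorder_cases) (auto simp: abs_minus_commute)
  qed
  then show ?thesis by blast
qed

lemma aux3:
  fixes al be ga X Y :: real
  assumes "0 \<le> al" "0 \<le> be" "0 \<le> ga" "0 \<le> X" "0 \<le> Y"
  shows "al * X + be * X + ga * Y \<le> (al + be + ga) * (X + Y)"
proof -
  have "0 \<le> al * Y" "0 \<le> be * Y" "0 \<le> ga * X" using assms by simp_all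
  then show ?thesis by (simp add: algebra_simps)
qed

lemma lipA:
  fixes a a' b b' :: "real \<Rightarrow> real"
  assumes da: "\<And>z. 0 < z \<Longrightarrow> DERIV a z :> a' z" and ca: "\<And>z. 0 < z \<Longrightarrow> isCont a' z"
    and db: "\<And>z. 0 < z \<Longrightarrow> DERIV b z :> b' z" and cb: "\<And>z. 0 < z \<Longrightarrow> isCont b' z"
    and m: "0 < m"
  shows "\<exists>L. \<forall>r1 r2 p1 p2. m \<le> r1 \<and> r1 \<le> M \<and> m \<le> r2 \<and> r2 \<le> M
        \<and> \<bar>p1\<bar> \<le> P \<and> \<bar>p2\<bar> \<le> P \<longrightarrow> \<bar>(a r1 - b r1 * p1^2 / 2) - (a r2 - b r2 * p2^2 / 2)\<bar> \<le> L * (\<bar>r1 - r2\<bar> + \<bar>p1 - p2\<bar>)"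
proof (cases "m \<le> M")
  case False then show ?thesis by auto
next
  case True
  obtain La where La: "\<And>r1 r2. m \<le> r1 \<Longrightarrow> r1 \<le> M \<Longrightarrow> m \<le> r2 \<Longrightarrow> r2 \<le> M \<Longrightarrow> \<bar>a r1 - a r2\<bar> \<le> La * \<bar>r1 - r2\<bar>"
  proof -
    have "continuous_on {m..M} a'" using ca m by (intro continuous_at_imp_continuous_on) auto
    then show ?thesis using lip_C1[of m M a a'] da m that by auto
  qed
  obtain Lb where Lb: "\<And>r1 r2. m \<le> r1 \<Longrightarrow> r1 \<le> M \<Longrightarrow> m \<le> r2 \<Longrightarrow> r2 \<le> M \<Longrightarrow> \<bar>b r1 - b r2\<bar> \<le> Lb * \<bar>r1 - r2\<bar>"
  proof -
    have "continuous_on {m..M} b'" using cb m by (intro continuous_at_imp_continuous_on) auto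
    then show ?thesis using lip_C1[of m M b b'] db m that by auto
  qed
  have "continuous_on {m..M} (\<lambda>z. \<bar>b z\<bar>)" using db m
    by (intro continuous_intros continuous_at_imp_continuous_on) (meson DERIV_isCont atLeastAtMost_iff less_le_trans)
  moreover have ne: "{m..M} \<noteq> {}" using True by simp
  ultimately obtain z0 where z0: "\<And>z. z \<in> {m..M} \<Longrightarrow> \<bar>b z\<bar> \<le> \<bar>b z0\<bar>"
    using continuous_attains_sup[of "{m..M}" "\<lambda>z. \<bar>b z\<bar>"] by blast
  define B where "B = \<bar>b z0\<bar>"
  define L where "L = \<bar>La\<bar> + \<bar>Lb\<bar> * P^2 / 2 + B * \<bar>P\<bar>"
  show ?thesis
  proof (intro exI[of _ L] allI impI)
    fix r1 r2 p1 p2 assume h: "m \<le> r1 \<and> r1 \<le> M \<and> m \<le> r2 \<and> r2 \<le> M \<and> \<bar>p1\<bar> \<le> P \<and> \<bar>p2\<bar> \<le> P"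
    have e: "(a r1 - b r1 * p1^2 / 2) - (a r2 - b r2 * p2^2 / 2)
        = (a r1 - a r2) - (b r1 - b r2) * p1^2 / 2 - b r2 * ((p1 - p2) * (p1 + p2)) / 2"
      by (simp add: field_simps power2_eq_square)
    have 1: "\<bar>a r1 - a r2\<bar> \<le> \<bar>La\<bar> * \<bar>r1 - r2\<bar>"
    proof -
      have "La * \<bar>r1 - r2\<bar> \<le> \<bar>La\<bar> * \<bar>r1 - r2\<bar>" by (rule mult_right_mono) auto
      then show ?thesis using La[of r1 r2] h by linarith
    qed
    have "\<bar>p1\<bar>^2 \<le> P^2" using h by (intro power_mono) auto
    then have p1: "p1^2 \<le> P^2" by simp
    have "\<bar>(b r1 - b r2) * p1^2 / 2\<bar> = \<bar>b r1 - b r2\<bar> * p1^2 / 2" by (simp add: abs_mult)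
    also have "\<dots> \<le> (\<bar>Lb\<bar> * \<bar>r1 - r2\<bar>) * P^2 / 2"
    proof -
      have "\<bar>b r1 - b r2\<bar> \<le> \<bar>Lb\<bar> * \<bar>r1 - r2\<bar>"
      proof -
      have "Lb * \<bar>r1 - r2\<bar> \<le> \<bar>Lb\<bar> * \<bar>r1 - r2\<bar>" by (rule mult_right_mono) auto
      then show ?thesis using Lb[of r1 r2] h by linarith
    qed
      then show ?thesis using p1 by (intro divide_right_mono mult_mono) auto
    qed
    finally have 2: "\<bar>(b r1 - b r2) * p1^2 / 2\<bar> \<le> \<bar>Lb\<bar> * P^2 / 2 * \<bar>r1 - r2\<bar>" by (simp add: mult_ac)
    have "\<bar>b r2 * ((p1 - p2) * (p1 + p2)) / 2\<bar> = \<bar>b r2\<bar> * \<bar>p1 - p2\<bar> * \<bar>p1 + p2\<bar> / 2"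
      by (simp add: abs_mult)
    also have "\<dots> \<le> B * \<bar>p1 - p2\<bar> * (2 * \<bar>P\<bar>) / 2"
    proof -
      have "\<bar>b r2\<bar> \<le> B" using z0[of r2] h by (auto simp: B_def)
      moreover have "\<bar>p1 + p2\<bar> \<le> 2 * \<bar>P\<bar>" using h abs_triangle_ineq[of p1 p2] by auto
      ultimately show ?thesis by (intro divide_right_mono mult_mono) auto
    qed
    finally have 3: "\<bar>b r2 * ((p1 - p2) * (p1 + p2)) / 2\<bar> \<le> B * \<bar>P\<bar> * \<bar>p1 - p2\<bar>" by (simp add: mult_ac)
    have "\<bar>(a r1 - b r1 * p1^2 / 2) - (a r2 - b r2 * p2^2 / 2)\<bar>
        \<le> \<bar>La\<bar> * \<bar>r1 - r2\<bar> + \<bar>Lb\<bar> * P^2 / 2 * \<bar>r1 - r2\<bar> + B * \<bar>P\<bar> * \<bar>p1 - p2\<bar>"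
      unfolding e using 1 2 3 by linarith
    also have "\<dots> \<le> L * (\<bar>r1 - r2\<bar> + \<bar>p1 - p2\<bar>)"
      unfolding L_def by (rule aux3) (auto simp: B_def)
    finally show "\<bar>(a r1 - b r1 * p1^2 / 2) - (a r2 - b r2 * p2^2 / 2)\<bar> \<le> L * (\<bar>r1 - r2\<bar> + \<bar>p1 - p2\<bar>)" .
  qed
qed



lemma smooth_D:
  assumes "smooth_on S f" "x \<in> S"
  shows "DERIV f x :> deriv f x" "DERIV (deriv f) x :> deriv (deriv f) x"
    "DERIV (deriv (deriv f)) x :> deriv (deriv (deriv f)) x"
proof -
  have *: "((deriv ^^ n) f) differentiable (at x)" for n using assms by (auto simp: smooth_on_def)
  show "DERIV f x :> deriv f x" using *[of 0] by (simp add: DERIV_deriv_iff_real_differentiable)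
  show "DERIV (deriv f) x :> deriv (deriv f) x" using *[of 1] by (simp add: DERIV_deriv_iff_real_differentiable)
  show "DERIV (deriv (deriv f)) x :> deriv (deriv (deriv f)) x" using *[of 2]
    by (simp add: DERIV_deriv_iff_real_differentiable numeral_2_eq_2)
qed

definition Fc :: "(real \<Rightarrow> real) \<Rightarrow> real \<Rightarrow> real \<Rightarrow> real" where
  "Fc G c r = - (c^2 / (2 * r)) * (r - 1)^2 + G r"
definition Fp :: "(real \<Rightarrow> real) \<Rightarrow> real \<Rightarrow> real \<Rightarrow> real" where
  "Fp g c r = - (c^2) * (r - 1) / r + c^2 * (r - 1)^2 / (2 * r^2) + g r"
definition Fpp :: "(real \<Rightarrow> real) \<Rightarrow> real \<Rightarrow> real \<Rightarrow> real" where
  "Fpp g1 c r = g1 r - c^2 / r^3"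
definition Fppp :: "(real \<Rightarrow> real) \<Rightarrow> real \<Rightarrow> real \<Rightarrow> real" where
  "Fppp g2 c r = g2 r + 3 * c^2 / r^4"

locale setting =
  fixes K g G :: "real \<Rightarrow> real"
  assumes dg: "\<And>x. 0 < x \<Longrightarrow> DERIV g x :> deriv g x"
    and dg1: "\<And>x. 0 < x \<Longrightarrow> DERIV (deriv g) x :> deriv (deriv g) x"
    and dg2: "\<And>x. 0 < x \<Longrightarrow> DERIV (deriv (deriv g)) x :> deriv (deriv (deriv g)) x"
    and dK: "\<And>x. 0 < x \<Longrightarrow> DERIV K x :> deriv K x"
    and dK1: "\<And>x. 0 < x \<Longrightarrow> DERIV (deriv K) x :> deriv (deriv K) x"
    and dK2: "\<And>x. 0 < x \<Longrightarrow> DERIV (deriv (deriv K)) x :> deriv (deriv (deriv K)) x"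
    and Kpos: "\<And>x. 0 < x \<Longrightarrow> K x > 0"
    and g_1: "g 1 = 0" and g1_1: "deriv g 1 = 1"
    and Gam: "deriv (deriv g) 1 + 3 \<noteq> 0"
    and dG: "\<And>x. 0 < x \<Longrightarrow> DERIV G x :> g x"
    and G_1: "G 1 = 0"
begin

abbreviation "g1 \<equiv> deriv g"
abbreviation "g2 \<equiv> deriv g1"
abbreviation "K1 \<equiv> deriv K"
abbreviation "K2 \<equiv> deriv K1"

lemma dFc: "0 < r \<Longrightarrow> DERIV (Fc G c) r :> Fp g c r"
  unfolding Fc_def Fp_def
  by (rule derivative_eq_intros refl dG | simp)+ (simp add: field_simps power2_eq_square)

lemma dFp: "0 < r \<Longrightarrow> DERIV (Fp g c) r :> Fpp g1 c r"
  unfolding Fpp_def Fp_def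
  by (rule derivative_eq_intros refl dg | simp)+ (simp add: field_simps eval_nat_numeral)

lemma dFpp: "0 < r \<Longrightarrow> DERIV (Fpp g1 c) r :> Fppp g2 c r"
  unfolding Fpp_def Fppp_def
  by (rule derivative_eq_intros refl dg1 | simp)+ (simp add: field_simps eval_nat_numeral)

lemma f_derivs:
  assumes s1: "s = 1 \<or> s = -1" and y: "0 \<le> y" "y \<le> 1/2"
  shows "DERIV (\<lambda>y. Fc G c (1 + s * y)) y :> s * Fp g c (1 + s * y)"
    "DERIV (\<lambda>y. s * Fp g c (1 + s * y)) y :> Fpp g1 c (1 + s * y)"
    "DERIV (\<lambda>y. Fpp g1 c (1 + s * y)) y :> s * Fppp g2 c (1 + s * y)"
proof -
  have s: "s * s = 1" using s1 by auto
  have "\<bar>s\<bar> = 1" using s1 by auto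
  then have "\<bar>s * y\<bar> \<le> 1/2" using y by (simp add: abs_mult)
  then have r: "0 < 1 + s * y" by linarith
  have dl: "DERIV (\<lambda>y. 1 + s * y) y :> s" by (auto intro!: derivative_eq_intros)
  show "DERIV (\<lambda>y. Fc G c (1 + s * y)) y :> s * Fp g c (1 + s * y)"
    using DERIV_chain2[where f="Fc G c", OF dFc[OF r] dl] by (simp add: mult.commute)
  have "DERIV (\<lambda>y. Fp g c (1 + s * y)) y :> Fpp g1 c (1 + s * y) * s"
    using DERIV_chain2[where f="Fp g c", OF dFp[OF r] dl] by simp
  then show "DERIV (\<lambda>y. s * Fp g c (1 + s * y)) y :> Fpp g1 c (1 + s * y)"
  proof -
    have "DERIV (\<lambda>y. s * Fp g c (1 + s * y)) y :> s * (Fpp g1 c (1 + s * y) * s)"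
      by (rule DERIV_cmult) fact
    moreover have "s * (Fpp g1 c (1 + s * y) * s) = Fpp g1 c (1 + s * y) * (s * s)" by (simp only: ac_simps)
    ultimately show ?thesis using s by simp
  qed
  show "DERIV (\<lambda>y. Fpp g1 c (1 + s * y)) y :> s * Fppp g2 c (1 + s * y)"
    using DERIV_chain2[where f="Fpp g1 c", OF dFpp[OF r] dl] by (simp add: mult.commute)
qed

lemma F_at1: "Fc G c 1 = 0" "Fp g c 1 = 0" "Fpp g1 c 1 = 1 - c^2"
  by (simp_all add: Fc_def Fp_def Fpp_def G_1 g_1 g1_1)

definition "Gm = g2 1 + 3"
definition "s0 = (if Gm > 0 then -1 else (1::real))"

lemma s0: "s0 * s0 = 1" "s0 * Gm = - \<bar>Gm\<bar>" "\<bar>Gm\<bar> > 0"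
  using Gam by (auto simp: s0_def Gm_def)


lemma delta_ex: "\<exists>d>0. d \<le> 1/2 \<and> (\<forall>c r. \<bar>r - 1\<bar> \<le> d \<longrightarrow> c^2 \<le> 1 \<longrightarrow> 1 - c^2 < \<bar>Gm\<bar>/64 \<longrightarrow> s0 * Fppp g2 c r < 0)"
proof -
  have "isCont g2 1" by (rule DERIV_isCont[OF dg2]) simp
  then have "isCont (\<lambda>r. g2 r + 3 / r^4) 1" by (auto intro!: continuous_intros)
  then obtain d0 where d0: "d0 > 0" "\<And>r. r \<noteq> 1 \<Longrightarrow> \<bar>r - 1\<bar> < d0 \<Longrightarrow> \<bar>(g2 r + 3 / r^4) - Gm\<bar> < \<bar>Gm\<bar>/4"
    using LIM_D[of "\<lambda>r. g2 r + 3 / r^4" Gm 1 "\<bar>Gm\<bar>/4"] s0(3) unfolding isCont_def by (auto simp: Gm_def)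
  define d where "d = min (d0/2) (1/2)"
  have close: "\<bar>(g2 r + 3 / r^4) - Gm\<bar> < \<bar>Gm\<bar>/4" if "\<bar>r - 1\<bar> \<le> d" for r
  proof (cases "r = 1")
    case True then show ?thesis using s0(3) by (simp add: Gm_def)
  next
    case False then show ?thesis using d0 that by (auto simp: d_def)
  qed
  have "s0 * Fppp g2 c r < 0" if r: "\<bar>r - 1\<bar> \<le> d" and c: "c^2 \<le> 1" "1 - c^2 < \<bar>Gm\<bar>/64" for c r
  proof -
    have rh: "r \<ge> 1/2" using r by (auto simp: d_def abs_if split: if_splits)
    have "(1/2)^4 \<le> r^4" using rh by (intro power_mono) auto
    then have r4: "r^4 \<ge> 1/16" by (simp add: power_divide)
    have q: "3 * (1 - c^2) / r^4 \<le> 48 * (1 - c^2)"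
    proof -
      have "3 * (1 - c^2) \<le> (48 * r^4) * (1 - c^2)" using r4 c by (intro mult_right_mono) auto
      moreover have "r^4 > 0" using r4 by linarith
      ultimately show ?thesis by (simp add: divide_le_eq mult_ac)
    qed
    have "3 / r^4 - 3 * (1 - c^2) / r^4 = 3 * c^2 / r^4"
      by (simp add: diff_divide_distrib[symmetric] algebra_simps)
    then have split: "Fppp g2 c r = (g2 r + 3 / r^4) - 3 * (1 - c^2) / r^4"
      by (simp add: Fppp_def)
    show ?thesis
    proof (cases "Gm > 0")
      case True
      then have "s0 = -1" by (simp add: s0_def)
      moreover have "Fppp g2 c r > 0"
      proof -
        have "- ((g2 r + 3/r^4) - Gm) < \<bar>Gm\<bar>/4 \<and> (g2 r + 3/r^4) - Gm < \<bar>Gm\<bar>/4"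
          using close[OF r] by (meson abs_less_iff)
        then have "g2 r + 3/r^4 > 3*Gm/4" using True by auto
        moreover have "3 * (1 - c^2) / r^4 < 3*Gm/4" 
        proof -
          have h1: "48 * (1 - c^2) < 3 * Gm / 4" using c abs_of_pos[OF True] by simp
          show ?thesis using q h1 by (rule le_less_trans)
        qed
        ultimately show ?thesis unfolding split by linarith
      qed
      ultimately show ?thesis by simp
    next
      case False
      then have "Gm < 0" "s0 = 1" using s0(3) by (auto simp: s0_def)
      moreover have "3 * (1 - c^2) / r^4 \<ge> 0" using c r4 by auto
      moreover have "g2 r + 3/r^4 < 3*Gm/4"
      proof -
        have "- ((g2 r + 3/r^4) - Gm) < \<bar>Gm\<bar>/4 \<and> (g2 r + 3/r^4) - Gm < \<bar>Gm\<bar>/4"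
          using close[OF r] by (meson abs_less_iff)
        then show ?thesis using \<open>Gm < 0\<close> by auto
      qed
      ultimately have "g2 r + 3/r^4 - 3*(1-c^2)/r^4 < 0" by linarith
      then show ?thesis using \<open>s0 = 1\<close> by (simp only: split mult_1)
    qed
  qed
  moreover have "d > 0" "d \<le> 1/2" using d0 by (auto simp: d_def)
  ultimately show ?thesis by blast
qed

lemma s0_cases: "s0 = 1 \<or> s0 = -1" by (auto simp: s0_def)

lemma F0_neg:
  assumes d: "0 < d" "d \<le> 1/2"
    and H: "\<forall>c r. \<bar>r - 1\<bar> \<le> d \<longrightarrow> c^2 \<le> 1 \<longrightarrow> 1 - c^2 < \<bar>Gm\<bar>/64 \<longrightarrow> s0 * Fppp g2 c r < 0"
  shows "Fc G 1 (1 + s0 * d) < 0"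
proof -
  have ab: "\<bar>s0\<bar> = 1" using s0_cases by auto
  have f3: "s0 * Fppp g2 1 (1 + s0 * y) < 0" if "0 < y" "y \<le> d" for y
    using H[rule_format, of "1 + s0 * y" 1] that s0(3) ab by (auto simp: abs_mult)
  have f2: "Fpp g1 1 (1 + s0 * y) < 0" if "0 < y" "y \<le> d" for y
    by (rule neg_from_deriv[where h="\<lambda>y. Fpp g1 1 (1 + s0 * y)" and h'="\<lambda>y. s0 * Fppp g2 1 (1 + s0 * y)" and d=d])
      (use that f3 F_at1 f_derivs(3)[OF s0_cases] d in auto)
  have f1: "s0 * Fp g 1 (1 + s0 * y) < 0" if "0 < y" "y \<le> d" for y
    by (rule neg_from_deriv[where h="\<lambda>y. s0 * Fp g 1 (1 + s0 * y)" and h'="\<lambda>y. Fpp g1 1 (1 + s0 * y)" and d=d])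
      (use that f2 F_at1 f_derivs(2)[OF s0_cases] d in auto)
  show ?thesis
    by (rule neg_from_deriv[where h="\<lambda>y. Fc G 1 (1 + s0 * y)" and h'="\<lambda>y. s0 * Fp g 1 (1 + s0 * y)" and d=d])
      (use f1 F_at1 f_derivs(1)[OF s0_cases] d in auto)
qed

lemma zero_ex:
  assumes d: "0 < d" "d \<le> 1/2"
    and H: "\<forall>c r. \<bar>r - 1\<bar> \<le> d \<longrightarrow> c^2 \<le> 1 \<longrightarrow> 1 - c^2 < \<bar>Gm\<bar>/64 \<longrightarrow> s0 * Fppp g2 c r < 0"
    and c: "0 < 1 - c^2" "1 - c^2 < \<bar>Gm\<bar>/64" "1 - c^2 < - Fc G 1 (1 + s0 * d)"
  shows "\<exists>y0. 0 < y0 \<and> y0 < d \<and> Fc G c (1 + s0 * y0) = 0 \<and> s0 * Fp g c (1 + s0 * y0) < 0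
           \<and> (\<forall>y. 0 < y \<and> y < y0 \<longrightarrow> Fc G c (1 + s0 * y) > 0)"
proof -
  have ab: "\<bar>s0\<bar> = 1" using s0_cases by auto
  have fd: "Fc G c (1 + s0 * d) < 0"
  proof -
    define r where "r = 1 + s0 * d"
    have r: "2 * r \<ge> 1" "(r - 1)^2 = d^2" using d s0_cases by (auto simp: r_def)
    have rp: "r > 0" using r by linarith
    have eq: "Fc G c r = Fc G 1 r + (1 - c^2) * ((r - 1)^2 / (2 * r))"
      using rp by (simp add: Fc_def field_simps)
    have "d^2 \<le> (1/2)^2" using d by (intro power_mono) auto
    then have "(r - 1)^2 \<le> 2 * r" using r by (simp add: power_divide)
    then have "(r - 1)^2 / (2 * r) \<le> 1" using rp by (simp add: divide_le_eq)
    then have "(1 - c^2) * ((r - 1)^2 / (2 * r)) \<le> (1 - c^2) * 1"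
      using c by (intro mult_left_mono) auto
    then have X: "(1 - c^2) * ((r - 1)^2 / (2 * r)) \<le> 1 - c^2" by simp
    have "Fc G c r < 0" using eq X c(3)[folded r_def] by linarith
    then show ?thesis unfolding r_def .
  qed
  have f3: "s0 * Fppp g2 c (1 + s0 * y) < 0" if "0 < y" "y \<le> d" for y
    using H[rule_format, of "1 + s0 * y" c] that c ab by (auto simp: abs_mult)
  show ?thesis
  proof (rule zero_struct[of d "\<lambda>y. Fc G c (1 + s0 * y)" "\<lambda>y. s0 * Fp g c (1 + s0 * y)"
        "\<lambda>y. Fpp g1 c (1 + s0 * y)" "\<lambda>y. s0 * Fppp g2 c (1 + s0 * y)"])
  qed (use d f3 fd F_at1 c f_derivs[OF s0_cases] in auto)
qed

end



context setting begin

definition "Qf c r = 2 * Fc G c r / K r"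
definition "Q1f c r = 2 * (Fp g c r * K r - Fc G c r * K1 r) / (K r)^2"

lemma dQ: "0 < r \<Longrightarrow> DERIV (Qf c) r :> Q1f c r"
proof -
  assume r: "0 < r"
  have Kn: "K r \<noteq> 0" using Kpos[OF r] by simp
  have "DERIV (\<lambda>r. 2 * Fc G c r / K r) r :> (2 * Fp g c r * K r - 2 * Fc G c r * K1 r) / (K r * K r)"
    using dFc[OF r] dK[OF r] Kn by (auto intro!: derivative_eq_intros)
  then show ?thesis unfolding Qf_def Q1f_def using Kn by (simp add: field_simps power2_eq_square)
qed

lemma dQ1: "0 < r \<Longrightarrow> \<exists>q. DERIV (Q1f c) r :> q"
proof -
  assume r: "0 < r"
  have Kn: "K r \<noteq> 0" using Kpos[OF r] by simp
  show ?thesis unfolding Q1f_def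
    apply (rule exI)
    apply (rule derivative_intros dFc[OF r] dK[OF r] dFp[OF r] dK1[OF r])+
    using Kn by simp
qed

lemma core_rho:
  assumes y0: "0 < y0" "y0 < 1/2" and a: "a = 1 + s0 * y0"
    and Fa: "Fc G c a = 0" and Fpa: "s0 * Fp g c a < 0"
    and Fpos: "\<And>y. 0 < y \<Longrightarrow> y < y0 \<Longrightarrow> Fc G c (1 + s0 * y) > 0"
  shows "\<exists>\<rho> \<rho>1 \<rho>2. (\<forall>t. DERIV \<rho> t :> \<rho>1 t) \<and> (\<forall>t. DERIV \<rho>1 t :> \<rho>2 t) \<and>
     (\<forall>t. \<rho> t \<ge> 1/2) \<and> (\<forall>t. K (\<rho> t) * \<rho>2 t + 1/2 * K1 (\<rho> t) * (\<rho>1 t)^2 = Fp g c (\<rho> t)) \<and>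
     \<rho> 0 = a \<and> \<rho>1 0 = 0 \<and> (\<forall>t. \<rho> (-t) = \<rho> t) \<and>
     (s0 = -1 \<longrightarrow> strict_mono_on {0..} \<rho>) \<and> (s0 = 1 \<longrightarrow> strict_antimono_on {0..} \<rho>) \<and>
     (\<forall>F\<in>{at_top, at_bot}. (\<rho> \<longlongrightarrow> 1) F \<and> (\<rho>1 \<longlongrightarrow> 0) F \<and> (\<rho>2 \<longlongrightarrow> 0) F)"
proof -
  have ss: "s0 * s0 = 1" "\<bar>s0\<bar> = 1" using s0_cases by auto
  have pos: "0 < a - s0 * z" if "0 \<le> z" "z \<le> y0" for z
  proof -
    have "\<bar>s0 * (y0 - z)\<bar> \<le> y0" using that ss by (simp add: abs_mult)
    then show ?thesis using a y0 by (auto simp: algebra_simps abs_le_iff)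
  qed
  define D where "D z = Qf c (a - s0 * z)" for z
  define D1 where "D1 z = - s0 * Q1f c (a - s0 * z)" for z
  have dl: "DERIV (\<lambda>z. a - s0 * z) z :> - s0" for z by (auto intro!: derivative_eq_intros)
  have dD: "DERIV D z :> D1 z" if "0 \<le> z" "z \<le> y0" for z
    unfolding D_def D1_def using DERIV_chain2[where f="Qf c", OF dQ[OF pos[OF that]] dl] by (simp add: mult.commute)
  have a1: "a - s0 * y0 = 1" using a ss by (simp add: algebra_simps)
  have dD1: "D1 differentiable (at y0)"
  proof -
    obtain q where q: "DERIV (Q1f c) 1 :> q" using dQ1[of 1] by auto
    have "DERIV (\<lambda>z. Q1f c (a - s0 * z)) y0 :> q * (- s0)"
      using DERIV_chain2[where f="Q1f c", OF _ dl] q a1 by simp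
    then have "DERIV D1 y0 :> - s0 * (q * (- s0))" unfolding D1_def by (rule DERIV_cmult)
    then show ?thesis by (auto simp: real_differentiable_def)
  qed
  have D0: "D 0 = 0" using Fa by (simp add: D_def Qf_def)
  have Ka: "K a > 0" using Kpos pos[of 0] y0 by auto
  have D10: "D1 0 > 0"
  proof -
    have "D1 0 = - 2 * (s0 * Fp g c a) / K a" using Fa Ka by (simp add: D1_def Q1f_def power2_eq_square)
    moreover have "2 * (s0 * Fp g c a) / K a < 0" using Fpa Ka by (simp add: divide_neg_pos)
    ultimately show ?thesis by simp
  qed
  have Dpos: "D z > 0" if "0 < z" "z < y0" for z
  proof -
    have "a - s0 * z = 1 + s0 * (y0 - z)" using a by (simp add: algebra_simps)
    then have "Fc G c (a - s0 * z) > 0" using Fpos[of "y0 - z"] that by simp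
    moreover have "K (a - s0 * z) > 0" using Kpos pos[of z] that by auto
    ultimately show ?thesis by (simp add: D_def Qf_def)
  qed
  have Dl: "D y0 = 0" using a1 F_at1 by (simp add: D_def Qf_def)
  have D1l: "D1 y0 = 0" using a1 F_at1 by (simp add: D1_def Q1f_def)
  obtain w w1 where w: "\<forall>t. DERIV w t :> w1 t" "\<forall>t. DERIV w1 t :> D1 (w t) / 2" "\<forall>t. (w1 t)^2 = D (w t)"
     "\<forall>t. 0 \<le> w t \<and> w t < y0" "w 0 = 0" "w1 0 = 0" "\<forall>t. w (-t) = w t" "strict_mono_on {0..} w"
     "\<forall>F\<in>{at_top, at_bot}. (w \<longlongrightarrow> y0) F \<and> (w1 \<longlongrightarrow> 0) F \<and> ((\<lambda>t. D1 (w t)) \<longlongrightarrow> 0) F"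
    using ode_construct[of y0 D D1, OF y0(1) dD dD1 D0 D10 Dpos Dl D1l] by blast
  define \<rho> where "\<rho> t = a - s0 * w t" for t
  define \<rho>1 where "\<rho>1 t = - s0 * w1 t" for t
  define \<rho>2 where "\<rho>2 t = - s0 * (D1 (w t) / 2)" for t
  have d\<rho>: "DERIV \<rho> t :> \<rho>1 t" for t
    unfolding \<rho>_def \<rho>1_def using w(1) by (auto intro!: derivative_eq_intros)
  have d\<rho>1: "DERIV \<rho>1 t :> \<rho>2 t" for t
    unfolding \<rho>1_def \<rho>2_def using w(2) by (auto intro!: derivative_eq_intros)
  have \<rho>pos: "\<rho> t \<ge> 1/2" for t
  proof -
    have "\<bar>y0 - w t\<bar> \<le> y0" using w(4)[rule_format, of t] by (simp add: abs_if)
    then have "\<bar>s0 * (y0 - w t)\<bar> \<le> y0" using ss by (simp add: abs_mult)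
    moreover have "\<rho> t = 1 + s0 * (y0 - w t)" using a by (simp add: \<rho>_def algebra_simps)
    ultimately show ?thesis using y0 by (auto simp: abs_le_iff)
  qed
  have \<rho>2Q: "\<rho>2 t = Q1f c (\<rho> t) / 2" for t
    using ss by (simp add: \<rho>2_def D1_def \<rho>_def)
  have \<rho>1Q: "(\<rho>1 t)^2 = Qf c (\<rho> t)" for t
  proof -
    have "(\<rho>1 t)^2 = (s0 * s0) * (w1 t)^2" by (simp add: \<rho>1_def power2_eq_square ac_simps)
    then show ?thesis using w(3) ss by (simp add: D_def \<rho>_def)
  qed
  have ode: "K (\<rho> t) * \<rho>2 t + 1/2 * K1 (\<rho> t) * (\<rho>1 t)^2 = Fp g c (\<rho> t)" for t
  proof -
    have Kp: "K (\<rho> t) > 0" using Kpos \<rho>pos[of t] by auto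
    show ?thesis unfolding \<rho>2Q \<rho>1Q Qf_def Q1f_def using Kp
      by (simp add: field_simps power2_eq_square)
  qed
  have even: "\<rho> (-t) = \<rho> t" for t using w(7) by (simp add: \<rho>_def)
  have mono1: "strict_mono_on {0..} \<rho>" if "s0 = -1"
    using w(8) that unfolding \<rho>_def strict_mono_on_def by auto
  have mono2: "strict_antimono_on {0..} \<rho>" if "s0 = 1"
    using w(8) that unfolding \<rho>_def strict_mono_on_def monotone_on_def by auto
  have lims: "(\<rho> \<longlongrightarrow> 1) F \<and> (\<rho>1 \<longlongrightarrow> 0) F \<and> (\<rho>2 \<longlongrightarrow> 0) F" if "F \<in> {at_top, at_bot}" for F
  proof -
    have h: "(w \<longlongrightarrow> y0) F" "(w1 \<longlongrightarrow> 0) F" "((\<lambda>t. D1 (w t)) \<longlongrightarrow> 0) F" using w(9) that by auto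
    have "(\<rho> \<longlongrightarrow> a - s0 * y0) F" unfolding \<rho>_def by (intro tendsto_intros h)
    moreover have "(\<rho>1 \<longlongrightarrow> - s0 * 0) F" unfolding \<rho>1_def by (intro tendsto_intros h)
    moreover have "(\<rho>2 \<longlongrightarrow> - s0 * (0 / 2)) F" unfolding \<rho>2_def by (intro tendsto_intros h) simp
    ultimately show ?thesis using a1 by simp
  qed
  show ?thesis
    apply (rule exI[of _ \<rho>], rule exI[of _ \<rho>1], rule exI[of _ \<rho>2])
    using d\<rho> d\<rho>1 \<rho>pos ode w(5,6) even mono1 mono2 lims by (auto simp: \<rho>_def \<rho>1_def)
qed

definition "Af c r p = Fp g c r / K r - K1 r / K r * p^2 / 2"

lemma lipAf: "0 < m \<Longrightarrow> \<exists>L. \<forall>r1 r2 p1 p2. m \<le> r1 \<and> r1 \<le> M \<and> m \<le> r2 \<and> r2 \<le> M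
        \<and> \<bar>p1\<bar> \<le> P \<and> \<bar>p2\<bar> \<le> P \<longrightarrow> \<bar>Af c r1 p1 - Af c r2 p2\<bar> \<le> L * (\<bar>r1 - r2\<bar> + \<bar>p1 - p2\<bar>)"
proof -
  assume m: "0 < m"
  have da: "DERIV (\<lambda>r. Fp g c r / K r) z :> (Fpp g1 c z * K z - Fp g c z * K1 z) / (K z)^2" if "0 < z" for z
    using dFp[OF that] dK[OF that] Kpos[OF that]
    by (auto intro!: derivative_eq_intros simp: field_simps power2_eq_square)
  have db: "DERIV (\<lambda>r. K1 r / K r) z :> (K2 z * K z - K1 z * K1 z) / (K z)^2" if "0 < z" for z
    using dK1[OF that] dK[OF that] Kpos[OF that]
    by (auto intro!: derivative_eq_intros simp: field_simps power2_eq_square)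
  have ca: "isCont (\<lambda>z. (Fpp g1 c z * K z - Fp g c z * K1 z) / (K z)^2) z" if "0 < z" for z
  proof -
    have "isCont (Fpp g1 c) z" "isCont K z" "isCont (Fp g c) z" "isCont K1 z"
      using dFpp[OF that] dK[OF that] dFp[OF that] dK1[OF that] by (auto intro: DERIV_isCont)
    then show ?thesis using Kpos[OF that] by (auto intro!: continuous_intros)
  qed
  have cb: "isCont (\<lambda>z. (K2 z * K z - K1 z * K1 z) / (K z)^2) z" if "0 < z" for z
  proof -
    have "isCont K2 z" "isCont K z" "isCont K1 z"
      using dK2[OF that] dK[OF that] dK1[OF that] by (auto intro: DERIV_isCont)
    then show ?thesis using Kpos[OF that] by (auto intro!: continuous_intros)
  qed
  show ?thesis
    using lipA[where a="\<lambda>r. Fp g c r / K r" and b="\<lambda>r. K1 r / K r", OF da ca db cb m, of M P]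
    by (simp add: Af_def)
qed

lemma ode_sol_D:
  assumes "ode_sol K g c I \<sigma>" "t \<in> I"
  shows "\<sigma> t > 0 \<and> DERIV \<sigma> t :> deriv \<sigma> t \<and> DERIV (deriv \<sigma>) t :> Af c (\<sigma> t) (deriv \<sigma> t)"
proof -
  have h: "\<sigma> t > 0" "\<sigma> differentiable (at t)" "deriv \<sigma> differentiable (at t)"
    "K (\<sigma> t) * deriv (deriv \<sigma>) t + 1/2 * K1 (\<sigma> t) * (deriv \<sigma> t)^2 = Fp g c (\<sigma> t)"
    using assms unfolding ode_sol_def Fp_def by auto
  have Kp: "K (\<sigma> t) > 0" using Kpos h(1) by auto
  have "deriv (deriv \<sigma>) t = Af c (\<sigma> t) (deriv \<sigma> t)"
    using h(4) Kp unfolding Af_def by (simp add: field_simps)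
  moreover have "DERIV (deriv \<sigma>) t :> deriv (deriv \<sigma>) t" "DERIV \<sigma> t :> deriv \<sigma> t"
    using h(2,3) by (simp_all add: DERIV_deriv_iff_real_differentiable)
  ultimately show ?thesis using h(1) by simp
qed

lemma core_full:
  fixes \<rho> \<rho>1 \<rho>2 :: "real \<Rightarrow> real"
  assumes d\<rho>: "\<forall>t. DERIV \<rho> t :> \<rho>1 t" and d\<rho>1: "\<forall>t. DERIV \<rho>1 t :> \<rho>2 t"
    and pos: "\<forall>t. \<rho> t \<ge> 1/2"
    and ode: "\<forall>t. K (\<rho> t) * \<rho>2 t + 1/2 * K1 (\<rho> t) * (\<rho>1 t)^2 = Fp g c (\<rho> t)"
    and \<rho>0: "\<rho> 0 = a" and \<rho>10: "\<rho>1 0 = 0"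
    and lims: "\<forall>F\<in>{at_top, at_bot}. (\<rho> \<longlongrightarrow> 1) F \<and> (\<rho>1 \<longlongrightarrow> 0) F \<and> (\<rho>2 \<longlongrightarrow> 0) F"
  shows "ode_sol K g c UNIV \<rho> \<and> \<rho> 0 = a \<and> deriv \<rho> 0 = 0 \<and>
         (\<forall>I \<sigma>. open I \<and> is_interval I \<and> 0 \<in> I \<and> ode_sol K g c I \<sigma> \<and>
                 \<sigma> 0 = a \<and> deriv \<sigma> 0 = 0 \<longrightarrow> (\<forall>t\<in>I. \<sigma> t = \<rho> t)) \<and>
         (\<forall>u. u = (\<lambda>t. c * (\<rho> t - 1) / \<rho> t) \<longrightarrow>
            (\<forall>t. (\<lambda>s. \<rho> s * u s) differentiable (at t) \<and>
                 - c * deriv \<rho> t + deriv (\<lambda>s. \<rho> s * u s) t = 0) \<and>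
            (\<forall>t. u differentiable (at t) \<and> (\<lambda>s. u s ^ 2 / 2) differentiable (at t) \<and>
                 (\<lambda>s. g (\<rho> s)) differentiable (at t) \<and>
                 (\<lambda>s. K (\<rho> s) * deriv (deriv \<rho>) s + 1/2 * deriv K (\<rho> s) * (deriv \<rho> s)^2)
                    differentiable (at t) \<and>
                 - c * deriv u t + deriv (\<lambda>s. u s ^ 2 / 2) t + deriv (\<lambda>s. g (\<rho> s)) t
                 = deriv (\<lambda>s. K (\<rho> s) * deriv (deriv \<rho>) s + 1/2 * deriv K (\<rho> s) * (deriv \<rho> s)^2) t) \<and>
            (\<forall>F\<in>{at_top, at_bot}.
                (\<rho> \<longlongrightarrow> 1) F \<and> (deriv \<rho> \<longlongrightarrow> 0) F \<and> (deriv (deriv \<rho>) \<longlongrightarrow> 0) F \<and>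
                (u \<longlongrightarrow> 0) F \<and> (deriv u \<longlongrightarrow> 0) F \<and> (deriv (deriv u) \<longlongrightarrow> 0) F))"
proof -
  have D1: "deriv \<rho> = \<rho>1" using d\<rho> by (auto intro!: ext DERIV_imp_deriv)
  have D2: "deriv \<rho>1 = \<rho>2" using d\<rho>1 by (auto intro!: ext DERIV_imp_deriv)
  have pos': "\<rho> t > 0" for t using pos[rule_format, of t] by linarith
  have sol: "ode_sol K g c UNIV \<rho>"
    unfolding ode_sol_def D1 D2 using pos' d\<rho> d\<rho>1 ode
    by (auto simp: real_differentiable_def Fp_def)
  have uniq: "\<forall>t\<in>I. \<sigma> t = \<rho> t" if h: "open I" "is_interval I" "0 \<in> I" "ode_sol K g c I \<sigma>"
    "\<sigma> 0 = a" "deriv \<sigma> 0 = 0" for I \<sigma>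
  proof
    fix t assume t: "t \<in> I"
    show "\<sigma> t = \<rho> t"
    proof (rule uniq_ode2[where A="Af c" and x=\<sigma> and y=\<rho> and xp="deriv \<sigma>" and yp="deriv \<rho>" and I=I])
      show "\<And>m M P. 0 < m \<Longrightarrow> \<exists>L. \<forall>r1 r2 p1 p2. m \<le> r1 \<and> r1 \<le> M \<and> m \<le> r2 \<and> r2 \<le> M
        \<and> \<bar>p1\<bar> \<le> P \<and> \<bar>p2\<bar> \<le> P \<longrightarrow> \<bar>Af c r1 p1 - Af c r2 p2\<bar> \<le> L * (\<bar>r1 - r2\<bar> + \<bar>p1 - p2\<bar>)"
        by (rule lipAf)
      show "\<And>t. t \<in> I \<Longrightarrow> \<sigma> t > 0 \<and> DERIV \<sigma> t :> deriv \<sigma> t \<and> DERIV (deriv \<sigma>) t :> Af c (\<sigma> t) (deriv \<sigma> t)"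
        using ode_sol_D[OF h(4)] by blast
      show "\<And>t. t \<in> I \<Longrightarrow> \<rho> t > 0 \<and> DERIV \<rho> t :> deriv \<rho> t \<and> DERIV (deriv \<rho>) t :> Af c (\<rho> t) (deriv \<rho> t)"
        using ode_sol_D[OF sol] by blast
    qed (use h t \<rho>0 \<rho>10 D1 in auto)
  qed
  have upart: "(\<forall>t. (\<lambda>s. \<rho> s * u s) differentiable (at t) \<and>
                 - c * deriv \<rho> t + deriv (\<lambda>s. \<rho> s * u s) t = 0) \<and>
            (\<forall>t. u differentiable (at t) \<and> (\<lambda>s. u s ^ 2 / 2) differentiable (at t) \<and>
                 (\<lambda>s. g (\<rho> s)) differentiable (at t) \<and>
                 (\<lambda>s. K (\<rho> s) * deriv (deriv \<rho>) s + 1/2 * deriv K (\<rho> s) * (deriv \<rho> s)^2)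
                    differentiable (at t) \<and>
                 - c * deriv u t + deriv (\<lambda>s. u s ^ 2 / 2) t + deriv (\<lambda>s. g (\<rho> s)) t
                 = deriv (\<lambda>s. K (\<rho> s) * deriv (deriv \<rho>) s + 1/2 * deriv K (\<rho> s) * (deriv \<rho> s)^2) t) \<and>
            (\<forall>F\<in>{at_top, at_bot}.
                (\<rho> \<longlongrightarrow> 1) F \<and> (deriv \<rho> \<longlongrightarrow> 0) F \<and> (deriv (deriv \<rho>) \<longlongrightarrow> 0) F \<and>
                (u \<longlongrightarrow> 0) F \<and> (deriv u \<longlongrightarrow> 0) F \<and> (deriv (deriv u) \<longlongrightarrow> 0) F)"
    if u: "u = (\<lambda>t. c * (\<rho> t - 1) / \<rho> t)" for u
  proof -
    have nz: "\<rho> t \<noteq> 0" for t using pos'[of t] by simp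
    have \<rho>u: "(\<lambda>s. \<rho> s * u s) = (\<lambda>s. c * (\<rho> s - 1))" using nz by (auto simp: u)
    have d\<rho>u: "DERIV (\<lambda>s. \<rho> s * u s) t :> c * \<rho>1 t" for t
      unfolding \<rho>u using d\<rho> by (auto intro!: derivative_eq_intros)
    define u1 where "u1 t = c * \<rho>1 t / (\<rho> t)^2" for t
    define u2 where "u2 t = c * (\<rho>2 t / (\<rho> t)^2 - 2 * (\<rho>1 t)^2 / (\<rho> t)^3)" for t
    have du: "DERIV u t :> u1 t" for t
      unfolding u u1_def using d\<rho> nz[of t]
      by (auto intro!: derivative_eq_intros simp: field_simps power2_eq_square)
    have du1: "DERIV u1 t :> u2 t" for t
      unfolding u1_def u2_def using d\<rho> d\<rho>1 nz[of t]
      by (auto intro!: derivative_eq_intros simp: field_simps eval_nat_numeral)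
    have Du: "deriv u = u1" using du by (auto intro!: ext DERIV_imp_deriv)
    have Du1: "deriv u1 = u2" using du1 by (auto intro!: ext DERIV_imp_deriv)
    have dusq: "DERIV (\<lambda>s. u s ^ 2 / 2) t :> u t * u1 t" for t
      using du[of t] by (auto intro!: derivative_eq_intros)
    have dgr: "DERIV (\<lambda>s. g (\<rho> s)) t :> g1 (\<rho> t) * \<rho>1 t" for t
      using DERIV_chain2[where f=g, OF dg[OF pos'[of t]] d\<rho>[rule_format, of t]] .
    have Rf: "(\<lambda>s. K (\<rho> s) * deriv (deriv \<rho>) s + 1/2 * deriv K (\<rho> s) * (deriv \<rho> s)^2) = (\<lambda>s. Fp g c (\<rho> s))"
      using ode D1 D2 by auto
    have dRf: "DERIV (\<lambda>s. Fp g c (\<rho> s)) t :> Fpp g1 c (\<rho> t) * \<rho>1 t" for t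
      using DERIV_chain2[where f="Fp g c", OF dFp[OF pos'[of t]] d\<rho>[rule_format, of t]] .
    have iden: "- c * u1 t + u t * u1 t + g1 (\<rho> t) * \<rho>1 t = Fpp g1 c (\<rho> t) * \<rho>1 t" for t
      using nz[of t] unfolding u u1_def Fpp_def by (simp add: field_simps eval_nat_numeral)
    have part1: "(\<lambda>s. \<rho> s * u s) differentiable (at t) \<and> - c * deriv \<rho> t + deriv (\<lambda>s. \<rho> s * u s) t = 0" for t
      using d\<rho>u[of t] DERIV_imp_deriv[OF d\<rho>u[of t]] D1 by (auto simp: real_differentiable_def)
    have part2: "u differentiable (at t) \<and> (\<lambda>s. u s ^ 2 / 2) differentiable (at t) \<and>
                 (\<lambda>s. g (\<rho> s)) differentiable (at t) \<and>
                 (\<lambda>s. K (\<rho> s) * deriv (deriv \<rho>) s + 1/2 * deriv K (\<rho> s) * (deriv \<rho> s)^2)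
                    differentiable (at t) \<and>
                 - c * deriv u t + deriv (\<lambda>s. u s ^ 2 / 2) t + deriv (\<lambda>s. g (\<rho> s)) t
                 = deriv (\<lambda>s. K (\<rho> s) * deriv (deriv \<rho>) s + 1/2 * deriv K (\<rho> s) * (deriv \<rho> s)^2) t" for t
      unfolding Rf using du[of t] dusq[of t] dgr[of t] dRf[of t] iden[of t]
        DERIV_imp_deriv[OF du[of t]] DERIV_imp_deriv[OF dusq[of t]] DERIV_imp_deriv[OF dgr[of t]] DERIV_imp_deriv[OF dRf[of t]]
      by (auto simp: real_differentiable_def)
    have part3: "(\<rho> \<longlongrightarrow> 1) F \<and> (deriv \<rho> \<longlongrightarrow> 0) F \<and> (deriv (deriv \<rho>) \<longlongrightarrow> 0) F \<and>
                (u \<longlongrightarrow> 0) F \<and> (deriv u \<longlongrightarrow> 0) F \<and> (deriv (deriv u) \<longlongrightarrow> 0) F" if F: "F \<in> {at_top, at_bot}" for F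
    proof -
      have h: "(\<rho> \<longlongrightarrow> 1) F" "(\<rho>1 \<longlongrightarrow> 0) F" "(\<rho>2 \<longlongrightarrow> 0) F" using lims F by auto
      have "(u \<longlongrightarrow> c * (1 - 1) / 1) F" unfolding u by (intro tendsto_intros h) simp
      moreover have "(u1 \<longlongrightarrow> c * 0 / 1^2) F" unfolding u1_def by (intro tendsto_intros h) simp
      moreover have "(u2 \<longlongrightarrow> c * (0 / 1^2 - 2 * 0^2 / 1^3)) F" unfolding u2_def by (intro tendsto_intros h) simp_all
      ultimately show ?thesis using h D1 D2 Du Du1 by simp
    qed
    show ?thesis using part1 part2 part3 by blast
  qed
  show ?thesis using sol \<rho>0 \<rho>10 D1 uniq upart by auto
qed

end



theorem propositionA3:
  fixes K g G :: "real \<Rightarrow> real"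
  assumes K_smooth: "smooth_on {0<..} K"
    and g_smooth: "smooth_on {0<..} g"
    and K_pos: "\<forall>x>0. K x > 0"
    and g1: "g 1 = 0"
    and dg1: "deriv g 1 = 1"
    and Gamma_nz: "deriv (deriv g) 1 + 3 \<noteq> 0"
    and G_prim: "\<forall>x>0. (G has_real_derivative g x) (at x)"
    and G1: "G 1 = 0"
  shows "\<exists>\<epsilon>0>0. \<forall>\<epsilon> c \<gamma>. 0 < \<epsilon> \<and> \<epsilon> < \<epsilon>0 \<and> \<epsilon> < 1 \<and> c = sqrt (1 - \<epsilon>^2)
           \<and> \<gamma> = 1 / (deriv (deriv g) 1 + 3) \<longrightarrow>
      (\<exists>\<rho>::real \<Rightarrow> real.
         ode_sol K g c UNIV \<rho> \<and> \<rho> 0 = rho_m G \<gamma> \<epsilon> \<and> deriv \<rho> 0 = 0 \<and>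
         \<comment> \<open>uniqueness: it is THE solution of the Cauchy problem (its maximal solution is global)\<close>
         (\<forall>I \<sigma>. open I \<and> is_interval I \<and> 0 \<in> I \<and> ode_sol K g c I \<sigma> \<and>
                 \<sigma> 0 = rho_m G \<gamma> \<epsilon> \<and> deriv \<sigma> 0 = 0 \<longrightarrow> (\<forall>t\<in>I. \<sigma> t = \<rho> t)) \<and>
         (\<forall>u. u = (\<lambda>t. c * (\<rho> t - 1) / \<rho> t) \<longrightarrow>
            \<comment> \<open>first equation: -c rho' + (rho u)' = 0\<close>
            (\<forall>t. (\<lambda>s. \<rho> s * u s) differentiable (at t) \<and>
                 - c * deriv \<rho> t + deriv (\<lambda>s. \<rho> s * u s) t = 0) \<and>
            \<comment> \<open>second equation: -c u' + (u^2/2)' + g(rho)' = (K(rho) rho'' + 1/2 K'(rho) rho'^2)'\<close>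
            (\<forall>t. u differentiable (at t) \<and> (\<lambda>s. u s ^ 2 / 2) differentiable (at t) \<and>
                 (\<lambda>s. g (\<rho> s)) differentiable (at t) \<and>
                 (\<lambda>s. K (\<rho> s) * deriv (deriv \<rho>) s + 1/2 * deriv K (\<rho> s) * (deriv \<rho> s)^2)
                    differentiable (at t) \<and>
                 - c * deriv u t + deriv (\<lambda>s. u s ^ 2 / 2) t + deriv (\<lambda>s. g (\<rho> s)) t
                 = deriv (\<lambda>s. K (\<rho> s) * deriv (deriv \<rho>) s + 1/2 * deriv K (\<rho> s) * (deriv \<rho> s)^2) t) \<and>
            \<comment> \<open>behaviour at plus and minus infinity\<close>
            (\<forall>F\<in>{at_top, at_bot}.
                (\<rho> \<longlongrightarrow> 1) F \<and> (deriv \<rho> \<longlongrightarrow> 0) F \<and> (deriv (deriv \<rho>) \<longlongrightarrow> 0) F \<and>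
                (u \<longlongrightarrow> 0) F \<and> (deriv u \<longlongrightarrow> 0) F \<and> (deriv (deriv u) \<longlongrightarrow> 0) F)) \<and>
         (\<forall>t. \<rho> (- t) = \<rho> t) \<and>
         (\<gamma> > 0 \<longrightarrow> strict_mono_on {0..} \<rho>) \<and>
         (\<gamma> < 0 \<longrightarrow> strict_antimono_on {0..} \<rho>))"

proof -
  interpret setting K g G
  proof
    fix x :: real assume x: "0 < x"
    show "DERIV g x :> deriv g x" "DERIV (deriv g) x :> deriv (deriv g) x"
      "DERIV (deriv (deriv g)) x :> deriv (deriv (deriv g)) x"
      using smooth_D[OF g_smooth, of x] x by auto
    show "DERIV K x :> deriv K x" "DERIV (deriv K) x :> deriv (deriv K) x"
      "DERIV (deriv (deriv K)) x :> deriv (deriv (deriv K)) x"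
      using smooth_D[OF K_smooth, of x] x by auto
    show "K x > 0" using K_pos x by auto
    show "DERIV G x :> g x" using G_prim x by auto
  qed (use g1 dg1 Gamma_nz G1 in auto)
  obtain d where d: "d > 0" "d \<le> 1/2"
    and H: "\<forall>c r. \<bar>r - 1\<bar> \<le> d \<longrightarrow> c^2 \<le> 1 \<longrightarrow> 1 - c^2 < \<bar>Gm\<bar>/64 \<longrightarrow> s0 * Fppp g2 c r < 0"
    using delta_ex by blast
  define kap where "kap = - Fc G 1 (1 + s0 * d)"
  have kap: "kap > 0" using F0_neg[OF d H] by (simp add: kap_def)
  define e0 where "e0 = min 1 (min (sqrt kap) (sqrt (\<bar>Gm\<bar>/200)))"
  have e0: "e0 > 0" using kap s0(3) by (simp add: e0_def)
  show ?thesis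
  proof (intro exI[of _ e0] conjI allI impI e0)
    fix \<epsilon> c \<gamma> :: real
    assume h: "0 < \<epsilon> \<and> \<epsilon> < e0 \<and> \<epsilon> < 1 \<and> c = sqrt (1 - \<epsilon>^2) \<and> \<gamma> = 1 / (deriv (deriv g) 1 + 3)"
    have eps: "0 < \<epsilon>" "\<epsilon> < 1" "\<epsilon> < sqrt kap" "\<epsilon> < sqrt (\<bar>Gm\<bar>/200)"
      using h by (auto simp: e0_def)
    have "\<epsilon>^2 < 1" using eps by (simp add: power_less_one_iff abs_less_iff)
    then have c2: "c^2 = 1 - \<epsilon>^2" using h by simp
    have "\<epsilon>^2 < (sqrt kap)^2" using eps by (intro power_strict_mono) auto
    then have ek: "\<epsilon>^2 < kap" using kap by simp
    have "\<epsilon>^2 < (sqrt (\<bar>Gm\<bar>/200))^2" using eps by (intro power_strict_mono) auto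
    then have eg: "\<epsilon>^2 < \<bar>Gm\<bar>/200" by simp
    have cc: "0 < 1 - c^2" "1 - c^2 < \<bar>Gm\<bar>/64" "1 - c^2 < - Fc G 1 (1 + s0 * d)"
      using c2 eps ek eg kap s0(3) by (auto simp: kap_def)
    obtain y0 where y0: "0 < y0" "y0 < d" "Fc G c (1 + s0 * y0) = 0" "s0 * Fp g c (1 + s0 * y0) < 0"
      "\<And>y. 0 < y \<Longrightarrow> y < y0 \<Longrightarrow> Fc G c (1 + s0 * y) > 0"
      using zero_ex[OF d H cc] by blast
    define a where "a = 1 + s0 * y0"
    have y0h: "y0 < 1/2" using y0 d by auto
    have FeF: "Feps G \<epsilon> r = Fc G c r" for r using h by (simp add: Feps_def Fc_def)
    have gam: "\<gamma> = 1 / Gm" using h by (simp add: Gm_def)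
    have rm: "rho_m G \<gamma> \<epsilon> = a"
    proof (cases "Gm > 0")
      case True
      then have s: "s0 = -1" "\<gamma> > 0" using gam by (auto simp: s0_def)
      have "Sup {r. 0 < r \<and> r < 1 \<and> Feps G \<epsilon> r = 0} = a"
      proof (rule cSup_eq_maximum)
        show "a \<in> {r. 0 < r \<and> r < 1 \<and> Feps G \<epsilon> r = 0}"
          using y0 y0h s FeF by (auto simp: a_def)
        fix r assume "r \<in> {r. 0 < r \<and> r < 1 \<and> Feps G \<epsilon> r = 0}"
        then have r: "0 < r" "r < 1" "Fc G c r = 0" using FeF by auto
        show "r \<le> a"
        proof (rule ccontr)
          assume "\<not> r \<le> a"
          then have "0 < 1 - r" "1 - r < y0" using r s by (auto simp: a_def)
          then have "Fc G c (1 + s0 * (1 - r)) > 0" using y0(5) by blast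
          then show False using r s by simp
        qed
      qed
      then show ?thesis using s by (simp add: rho_m_def)
    next
      case False
      then have s: "s0 = 1" "\<not> \<gamma> > 0" using gam s0(3) by (auto simp: s0_def)
      have "Inf {r. 1 < r \<and> Feps G \<epsilon> r = 0} = a"
      proof (rule cInf_eq_minimum)
        show "a \<in> {r. 1 < r \<and> Feps G \<epsilon> r = 0}"
          using y0 y0h s FeF by (auto simp: a_def)
        fix r assume "r \<in> {r. 1 < r \<and> Feps G \<epsilon> r = 0}"
        then have r: "1 < r" "Fc G c r = 0" using FeF by auto
        show "a \<le> r"
        proof (rule ccontr)
          assume "\<not> a \<le> r"
          then have "0 < r - 1" "r - 1 < y0" using r s by (auto simp: a_def)
          then have "Fc G c (1 + s0 * (r - 1)) > 0" using y0(5) by blast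
          then show False using r s by simp
        qed
      qed
      then show ?thesis using s by (simp add: rho_m_def)
    qed
    obtain \<rho> \<rho>1 \<rho>2 where R: "\<forall>t. DERIV \<rho> t :> \<rho>1 t" "\<forall>t. DERIV \<rho>1 t :> \<rho>2 t"
      "\<forall>t. \<rho> t \<ge> 1/2" "\<forall>t. K (\<rho> t) * \<rho>2 t + 1/2 * K1 (\<rho> t) * (\<rho>1 t)^2 = Fp g c (\<rho> t)"
      "\<rho> 0 = a" "\<rho>1 0 = 0" "\<forall>t. \<rho> (-t) = \<rho> t"
      "s0 = -1 \<longrightarrow> strict_mono_on {0..} \<rho>" "s0 = 1 \<longrightarrow> strict_antimono_on {0..} \<rho>"
      "\<forall>F\<in>{at_top, at_bot}. (\<rho> \<longlongrightarrow> 1) F \<and> (\<rho>1 \<longlongrightarrow> 0) F \<and> (\<rho>2 \<longlongrightarrow> 0) F"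
      using core_rho[OF y0(1) y0h a_def y0(3)[folded a_def] y0(4)[folded a_def] y0(5)] by blast
    note full = core_full[OF R(1,2,3,4,5,6,10)]
    have m1: "\<gamma> > 0 \<longrightarrow> strict_mono_on {0..} \<rho>"
      using R(8) gam by (auto simp: s0_def zero_less_divide_iff)
    have m2: "\<gamma> < 0 \<longrightarrow> strict_antimono_on {0..} \<rho>"
      using R(9) gam by (auto simp: s0_def divide_less_0_iff)
    show "\<exists>\<rho>::real \<Rightarrow> real.
         ode_sol K g c UNIV \<rho> \<and> \<rho> 0 = rho_m G \<gamma> \<epsilon> \<and> deriv \<rho> 0 = 0 \<and>
         (\<forall>I \<sigma>. open I \<and> is_interval I \<and> 0 \<in> I \<and> ode_sol K g c I \<sigma> \<and>
                 \<sigma> 0 = rho_m G \<gamma> \<epsilon> \<and> deriv \<sigma> 0 = 0 \<longrightarrow> (\<forall>t\<in>I. \<sigma> t = \<rho> t)) \<and>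
         (\<forall>u. u = (\<lambda>t. c * (\<rho> t - 1) / \<rho> t) \<longrightarrow>
            (\<forall>t. (\<lambda>s. \<rho> s * u s) differentiable (at t) \<and>
                 - c * deriv \<rho> t + deriv (\<lambda>s. \<rho> s * u s) t = 0) \<and>
            (\<forall>t. u differentiable (at t) \<and> (\<lambda>s. u s ^ 2 / 2) differentiable (at t) \<and>
                 (\<lambda>s. g (\<rho> s)) differentiable (at t) \<and>
                 (\<lambda>s. K (\<rho> s) * deriv (deriv \<rho>) s + 1/2 * deriv K (\<rho> s) * (deriv \<rho> s)^2)
                    differentiable (at t) \<and>
                 - c * deriv u t + deriv (\<lambda>s. u s ^ 2 / 2) t + deriv (\<lambda>s. g (\<rho> s)) t
                 = deriv (\<lambda>s. K (\<rho> s) * deriv (deriv \<rho>) s + 1/2 * deriv K (\<rho> s) * (deriv \<rho> s)^2) t) \<and>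
            (\<forall>F\<in>{at_top, at_bot}.
                (\<rho> \<longlongrightarrow> 1) F \<and> (deriv \<rho> \<longlongrightarrow> 0) F \<and> (deriv (deriv \<rho>) \<longlongrightarrow> 0) F \<and>
                (u \<longlongrightarrow> 0) F \<and> (deriv u \<longlongrightarrow> 0) F \<and> (deriv (deriv u) \<longlongrightarrow> 0) F)) \<and>
         (\<forall>t. \<rho> (- t) = \<rho> t) \<and>
         (\<gamma> > 0 \<longrightarrow> strict_mono_on {0..} \<rho>) \<and>
         (\<gamma> < 0 \<longrightarrow> strict_antimono_on {0..} \<rho>)"
      apply (rule exI[of _ \<rho>])
      using full rm R(7) m1 m2 by simp
  qed
qed


end
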